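(* Let $P : \mathcal{E}\to\mathcal{B}$ be a lax functor between bicategories which is fibered in pseudogroupoids. Then for each object $b$ of $\mathcal{B}$ the fiber bicategory $P^{-1}(b)$ is a pseudogroupoid.
   Context: For a lax functor $P$ with structure 2-cells $\varphi_{g,f} : Pg\circ Pf\Rightarrow P(g\circ f)$: a 1-morphism $f : x\to y$ of $\mathcal{E}$ is cartesian if (i) for every 1-morphism $g : z\to y$ in $\mathcal{E}$, 1-morphism $h : Pz\to Px$ in $\mathcal{B}$ and invertible 2-morphism $\alpha : Pf\circ h\Rightarrow Pg$, there exist a 1-morphism $\tilde h : z\to x$ and invertible 2-morphisms $\tilde\alpha : f\circ\tilde h\Rightarrow g$, $\tilde\beta : P\tilde h\Rightarrow h$ with $\alpha\cdot(Pf*\tilde\beta) = P\tilde\alpha\cdot\varphi_{f,\tilde h}$ (a "lift" of $(h,\alpha)$); and (ii) for every 2-morphism $\sigma : g\Rightarrow g'$ in $\mathcal{E}$, lifts $(\tilde h,\tilde\alpha,\tilde\beta)$ of $(h,\alpha)$ and $(\tilde h',\tilde\alpha',\tilde\beta')$ of $(h',\alpha')$ (with $\alpha' : Pf\circ h'\Rightarrow Pg'$), and every 2-morphism $\delta : h\Rightarrow h'$ with $\alpha'\cdot(Pf*\delta) = P\sigma\cdot\alpha$, there is a unique 2-morphism $\tilde\delta : \tilde h\Rightarrow\tilde h'$ with $\tilde\alpha'\cdot(f*\tilde\delta) = \sigma\cdot\tilde\alpha$ and $\tilde\beta'\cdot P\tilde\delta = \delta\cdot\tilde\beta$. $P$ is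 fibered in pseudogroupoids if every 1-morphism of $\mathcal{E}$ is cartesian, every 1-morphism $f : b\to P(e)$ in $\mathcal{B}$ has a 1-morphism $\tilde f : e'\to e$ in $\mathcal{E}$ with $P\tilde f = f$, and each functor $P : \mathcal{E}(x,y)\to\mathcal{B}(Px,Py)$ is fibered in groupoids (every morphism cartesian in the usual 1-categorical sense and every morphism of $\mathcal{B}(Px,Py)$ into $P(u)$ lifts to a morphism into $u$). Cartesian lifts are assumed chosen (a cleavage). The fiber bicategory $P^{-1}(b)$ has as objects the objects $e$ with $Pe=b$, as 1-morphisms the 1-morphisms $h$ of $\mathcal{E}$ with $Ph=\mathrm{id}_b$, and as 2-morphisms the 2-morphisms $\alpha$ of $\mathcal{E}$ with $P\alpha=\mathrm{id}_{\mathrm{id}_b}$, with vertical composition as in $\mathcal{E}$. The composite $g\,\hat\circ\, f$ of 1-morphisms is the domain of the chosen cartesian lift (for the functor $P:\mathcal{E}(x,z)\to\mathcal{B}(b,b)$) at $g\circ f$ of the 2-morphism $\mathrm{id}_b\Rightarrow\mathrm{id}_b\circ\mathrm{id}_b = Pg\circ Pf\Rightarrow P(g\circ f)$ (inverse unitor followed by $\varphi_{g,f}$); horizontal composition of 2-morphisms, identities and coherence isomorphisms are induced by the universal property of these lifts. A pseudogroupoid is a bicategory in which every 1-morphism is an equivalence (has a pseudo-inverse $g$ with $g\circ f\cong\mathrm{id}$, $f\circ g\cong\mathrm{id}$) and every 2-morphism is invertible. *)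

theory Defs
  imports Main
begin

section \<open>Bicategories (globular presentation)\<close>

text \<open>A bicategory is given by a set of objects, a set of 1-cells with source and
target, a set of 2-cells with domain and codomain 1-cell, identities, composition
of 1-cells (cmp g f = g o f), vertical composition (vcmp beta alpha = beta . alpha),
horizontal composition (hcmp beta alpha = beta * alpha), associators
asc h g f : (h o g) o f => h o (g o f), and unitors lun f : id o f => f,
run f : f o id => f.  Operations are total HOL functions, only meaningful on
well-typed arguments.\<close>

record ('o,'a,'c) bicat =
  ob   :: "'o set"
  ar   :: "'a set"
  ce   :: "'c set"
  bsrc :: "'a \<Rightarrow> 'o"
  btrg :: "'a \<Rightarrow> 'o"
  dom2 :: "'c \<Rightarrow> 'a"
  cod2 :: "'c \<Rightarrow> 'a"
  idm  :: "'o \<Rightarrow> 'a"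
  cmp  :: "'a \<Rightarrow> 'a \<Rightarrow> 'a"
  idc  :: "'a \<Rightarrow> 'c"
  vcmp :: "'c \<Rightarrow> 'c \<Rightarrow> 'c"
  hcmp :: "'c \<Rightarrow> 'c \<Rightarrow> 'c"
  asc  :: "'a \<Rightarrow> 'a \<Rightarrow> 'a \<Rightarrow> 'c"
  lun  :: "'a \<Rightarrow> 'c"
  run  :: "'a \<Rightarrow> 'c"

definition iso2 :: "('o,'a,'c) bicat \<Rightarrow> 'c \<Rightarrow> bool" where
  "iso2 B \<alpha> \<longleftrightarrow> \<alpha> \<in> ce B \<and>
     (\<exists>\<beta>\<in>ce B. dom2 B \<beta> = cod2 B \<alpha> \<and> cod2 B \<beta> = dom2 B \<alpha> \<and>
        vcmp B \<beta> \<alpha> = idc B (dom2 B \<alpha>) \<and> vcmp B \<alpha> \<beta> = idc B (cod2 B \<alpha>))"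

definition inv2 :: "('o,'a,'c) bicat \<Rightarrow> 'c \<Rightarrow> 'c" where
  "inv2 B \<alpha> = (THE \<beta>. \<beta> \<in> ce B \<and> dom2 B \<beta> = cod2 B \<alpha> \<and> cod2 B \<beta> = dom2 B \<alpha> \<and>
        vcmp B \<beta> \<alpha> = idc B (dom2 B \<alpha>) \<and> vcmp B \<alpha> \<beta> = idc B (cod2 B \<alpha>))"

definition bicat :: "('o,'a,'c) bicat \<Rightarrow> bool" where
  "bicat B \<longleftrightarrow>
    (\<forall>f\<in>ar B. bsrc B f \<in> ob B \<and> btrg B f \<in> ob B) \<and>
    (\<forall>\<alpha>\<in>ce B. dom2 B \<alpha> \<in> ar B \<and> cod2 B \<alpha> \<in> ar B \<and>
        bsrc B (dom2 B \<alpha>) = bsrc B (cod2 B \<alpha>) \<and> btrg B (dom2 B \<alpha>) = btrg B (cod2 B \<alpha>)) \<and>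
    (\<forall>x\<in>ob B. idm B x \<in> ar B \<and> bsrc B (idm B x) = x \<and> btrg B (idm B x) = x) \<and>
    (\<forall>f\<in>ar B. \<forall>g\<in>ar B. bsrc B g = btrg B f \<longrightarrow>
        cmp B g f \<in> ar B \<and> bsrc B (cmp B g f) = bsrc B f \<and> btrg B (cmp B g f) = btrg B g) \<and>
    (\<forall>f\<in>ar B. idc B f \<in> ce B \<and> dom2 B (idc B f) = f \<and> cod2 B (idc B f) = f) \<and>
    (\<forall>\<alpha>\<in>ce B. \<forall>\<beta>\<in>ce B. dom2 B \<beta> = cod2 B \<alpha> \<longrightarrow>
        vcmp B \<beta> \<alpha> \<in> ce B \<and> dom2 B (vcmp B \<beta> \<alpha>) = dom2 B \<alpha> \<and> cod2 B (vcmp B \<beta> \<alpha>) = cod2 B \<beta>) \<and>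
    (\<forall>\<alpha>\<in>ce B. vcmp B (idc B (cod2 B \<alpha>)) \<alpha> = \<alpha> \<and> vcmp B \<alpha> (idc B (dom2 B \<alpha>)) = \<alpha>) \<and>
    (\<forall>\<alpha>\<in>ce B. \<forall>\<beta>\<in>ce B. \<forall>\<gamma>\<in>ce B. dom2 B \<beta> = cod2 B \<alpha> \<longrightarrow> dom2 B \<gamma> = cod2 B \<beta> \<longrightarrow>
        vcmp B \<gamma> (vcmp B \<beta> \<alpha>) = vcmp B (vcmp B \<gamma> \<beta>) \<alpha>) \<and>
    (\<forall>\<alpha>\<in>ce B. \<forall>\<beta>\<in>ce B. bsrc B (dom2 B \<beta>) = btrg B (dom2 B \<alpha>) \<longrightarrow>
        hcmp B \<beta> \<alpha> \<in> ce B \<and> dom2 B (hcmp B \<beta> \<alpha>) = cmp B (dom2 B \<beta>) (dom2 B \<alpha>) \<and>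
        cod2 B (hcmp B \<beta> \<alpha>) = cmp B (cod2 B \<beta>) (cod2 B \<alpha>)) \<and>
    (\<forall>f\<in>ar B. \<forall>g\<in>ar B. bsrc B g = btrg B f \<longrightarrow> hcmp B (idc B g) (idc B f) = idc B (cmp B g f)) \<and>
    (\<forall>\<alpha>\<in>ce B. \<forall>\<alpha>'\<in>ce B. \<forall>\<beta>\<in>ce B. \<forall>\<beta>'\<in>ce B.
        dom2 B \<alpha>' = cod2 B \<alpha> \<longrightarrow> dom2 B \<beta>' = cod2 B \<beta> \<longrightarrow> bsrc B (dom2 B \<beta>) = btrg B (dom2 B \<alpha>) \<longrightarrow>
        hcmp B (vcmp B \<beta>' \<beta>) (vcmp B \<alpha>' \<alpha>) = vcmp B (hcmp B \<beta>' \<alpha>') (hcmp B \<beta> \<alpha>)) \<and>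
    (\<forall>f\<in>ar B. \<forall>g\<in>ar B. \<forall>h\<in>ar B. bsrc B g = btrg B f \<longrightarrow> bsrc B h = btrg B g \<longrightarrow>
        iso2 B (asc B h g f) \<and> dom2 B (asc B h g f) = cmp B (cmp B h g) f \<and>
        cod2 B (asc B h g f) = cmp B h (cmp B g f)) \<and>
    (\<forall>\<alpha>\<in>ce B. \<forall>\<beta>\<in>ce B. \<forall>\<gamma>\<in>ce B.
        bsrc B (dom2 B \<beta>) = btrg B (dom2 B \<alpha>) \<longrightarrow> bsrc B (dom2 B \<gamma>) = btrg B (dom2 B \<beta>) \<longrightarrow>
        vcmp B (asc B (cod2 B \<gamma>) (cod2 B \<beta>) (cod2 B \<alpha>)) (hcmp B (hcmp B \<gamma> \<beta>) \<alpha>) =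
        vcmp B (hcmp B \<gamma> (hcmp B \<beta> \<alpha>)) (asc B (dom2 B \<gamma>) (dom2 B \<beta>) (dom2 B \<alpha>))) \<and>
    (\<forall>f\<in>ar B. iso2 B (lun B f) \<and> dom2 B (lun B f) = cmp B (idm B (btrg B f)) f \<and> cod2 B (lun B f) = f) \<and>
    (\<forall>f\<in>ar B. iso2 B (run B f) \<and> dom2 B (run B f) = cmp B f (idm B (bsrc B f)) \<and> cod2 B (run B f) = f) \<and>
    (\<forall>\<alpha>\<in>ce B. vcmp B \<alpha> (lun B (dom2 B \<alpha>)) =
        vcmp B (lun B (cod2 B \<alpha>)) (hcmp B (idc B (idm B (btrg B (dom2 B \<alpha>)))) \<alpha>)) \<and>
    (\<forall>\<alpha>\<in>ce B. vcmp B \<alpha> (run B (dom2 B \<alpha>)) =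
        vcmp B (run B (cod2 B \<alpha>)) (hcmp B \<alpha> (idc B (idm B (bsrc B (dom2 B \<alpha>)))))) \<and>
    (\<forall>f\<in>ar B. \<forall>g\<in>ar B. \<forall>h\<in>ar B. \<forall>k\<in>ar B.
        bsrc B g = btrg B f \<longrightarrow> bsrc B h = btrg B g \<longrightarrow> bsrc B k = btrg B h \<longrightarrow>
        vcmp B (hcmp B (idc B k) (asc B h g f))
          (vcmp B (asc B k (cmp B h g) f) (hcmp B (asc B k h g) (idc B f))) =
        vcmp B (asc B k h (cmp B g f)) (asc B (cmp B k h) g f)) \<and>
    (\<forall>f\<in>ar B. \<forall>g\<in>ar B. bsrc B g = btrg B f \<longrightarrow>
        vcmp B (hcmp B (idc B g) (lun B f)) (asc B g (idm B (btrg B f)) f) =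
        hcmp B (run B g) (idc B f))"

text \<open>phi g f : P g o P f => P (g o f);  phi0 x : id_{P x} => P (id_x).\<close>

record ('o,'a,'c,'p,'q,'r) laxf =
  fo   :: "'o \<Rightarrow> 'p"
  f1   :: "'a \<Rightarrow> 'q"
  f2   :: "'c \<Rightarrow> 'r"
  phi  :: "'a \<Rightarrow> 'a \<Rightarrow> 'r"
  phi0 :: "'o \<Rightarrow> 'r"

definition lax_functor ::
  "('o,'a,'c) bicat \<Rightarrow> ('p,'q,'r) bicat \<Rightarrow> ('o,'a,'c,'p,'q,'r) laxf \<Rightarrow> bool" where
  "lax_functor E B P \<longleftrightarrow> bicat E \<and> bicat B \<and>
    (\<forall>x\<in>ob E. fo P x \<in> ob B) \<and>
    (\<forall>f\<in>ar E. f1 P f \<in> ar B \<and> bsrc B (f1 P f) = fo P (bsrc E f) \<and> btrg B (f1 P f) = fo P (btrg E f)) \<and>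
    (\<forall>\<alpha>\<in>ce E. f2 P \<alpha> \<in> ce B \<and> dom2 B (f2 P \<alpha>) = f1 P (dom2 E \<alpha>) \<and> cod2 B (f2 P \<alpha>) = f1 P (cod2 E \<alpha>)) \<and>
    (\<forall>f\<in>ar E. f2 P (idc E f) = idc B (f1 P f)) \<and>
    (\<forall>\<alpha>\<in>ce E. \<forall>\<beta>\<in>ce E. dom2 E \<beta> = cod2 E \<alpha> \<longrightarrow> f2 P (vcmp E \<beta> \<alpha>) = vcmp B (f2 P \<beta>) (f2 P \<alpha>)) \<and>
    (\<forall>f\<in>ar E. \<forall>g\<in>ar E. bsrc E g = btrg E f \<longrightarrow>
        phi P g f \<in> ce B \<and> dom2 B (phi P g f) = cmp B (f1 P g) (f1 P f) \<and>
        cod2 B (phi P g f) = f1 P (cmp E g f)) \<and>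
    (\<forall>\<alpha>\<in>ce E. \<forall>\<beta>\<in>ce E. bsrc E (dom2 E \<beta>) = btrg E (dom2 E \<alpha>) \<longrightarrow>
        vcmp B (f2 P (hcmp E \<beta> \<alpha>)) (phi P (dom2 E \<beta>) (dom2 E \<alpha>)) =
        vcmp B (phi P (cod2 E \<beta>) (cod2 E \<alpha>)) (hcmp B (f2 P \<beta>) (f2 P \<alpha>))) \<and>
    (\<forall>x\<in>ob E. phi0 P x \<in> ce B \<and> dom2 B (phi0 P x) = idm B (fo P x) \<and> cod2 B (phi0 P x) = f1 P (idm E x)) \<and>
    (\<forall>f\<in>ar E. \<forall>g\<in>ar E. \<forall>h\<in>ar E. bsrc E g = btrg E f \<longrightarrow> bsrc E h = btrg E g \<longrightarrow>
        vcmp B (f2 P (asc E h g f))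
          (vcmp B (phi P (cmp E h g) f) (hcmp B (phi P h g) (idc B (f1 P f)))) =
        vcmp B (phi P h (cmp E g f))
          (vcmp B (hcmp B (idc B (f1 P h)) (phi P g f)) (asc B (f1 P h) (f1 P g) (f1 P f)))) \<and>
    (\<forall>f\<in>ar E. vcmp B (f2 P (lun E f))
          (vcmp B (phi P (idm E (btrg E f)) f) (hcmp B (phi0 P (btrg E f)) (idc B (f1 P f)))) =
        lun B (f1 P f)) \<and>
    (\<forall>f\<in>ar E. vcmp B (f2 P (run E f))
          (vcmp B (phi P f (idm E (bsrc E f))) (hcmp B (idc B (f1 P f)) (phi0 P (bsrc E f)))) =
        run B (f1 P f))"

definition is_lift ::
  "('o,'a,'c) bicat \<Rightarrow> ('p,'q,'r) bicat \<Rightarrow> ('o,'a,'c,'p,'q,'r) laxf \<Rightarrow>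
   'a \<Rightarrow> 'a \<Rightarrow> 'q \<Rightarrow> 'r \<Rightarrow> 'a \<Rightarrow> 'c \<Rightarrow> 'r \<Rightarrow> bool" where
  "is_lift E B P f g h \<alpha> ht at bt \<longleftrightarrow>
     ht \<in> ar E \<and> bsrc E ht = bsrc E g \<and> btrg E ht = bsrc E f \<and>
     iso2 E at \<and> dom2 E at = cmp E f ht \<and> cod2 E at = g \<and>
     iso2 B bt \<and> dom2 B bt = f1 P ht \<and> cod2 B bt = h \<and>
     vcmp B \<alpha> (hcmp B (idc B (f1 P f)) bt) = vcmp B (f2 P at) (phi P f ht)"

definition cartesian ::
  "('o,'a,'c) bicat \<Rightarrow> ('p,'q,'r) bicat \<Rightarrow> ('o,'a,'c,'p,'q,'r) laxf \<Rightarrow> 'a \<Rightarrow> bool" where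
  "cartesian E B P f \<longleftrightarrow> f \<in> ar E \<and>
    (\<forall>g\<in>ar E. \<forall>h\<in>ar B. \<forall>\<alpha>.
        btrg E g = btrg E f \<longrightarrow>
        bsrc B h = fo P (bsrc E g) \<longrightarrow> btrg B h = fo P (bsrc E f) \<longrightarrow>
        iso2 B \<alpha> \<longrightarrow> dom2 B \<alpha> = cmp B (f1 P f) h \<longrightarrow> cod2 B \<alpha> = f1 P g \<longrightarrow>
        (\<exists>ht at bt. is_lift E B P f g h \<alpha> ht at bt)) \<and>
    (\<forall>g g' \<sigma> h h' \<alpha> \<alpha>' ht at bt ht' at' bt' \<delta>.
        g \<in> ar E \<longrightarrow> g' \<in> ar E \<longrightarrow> btrg E g = btrg E f \<longrightarrow>
        \<sigma> \<in> ce E \<longrightarrow> dom2 E \<sigma> = g \<longrightarrow> cod2 E \<sigma> = g' \<longrightarrow>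
        h \<in> ar B \<longrightarrow> bsrc B h = fo P (bsrc E g) \<longrightarrow> btrg B h = fo P (bsrc E f) \<longrightarrow>
        h' \<in> ar B \<longrightarrow> bsrc B h' = fo P (bsrc E g') \<longrightarrow> btrg B h' = fo P (bsrc E f) \<longrightarrow>
        iso2 B \<alpha> \<longrightarrow> dom2 B \<alpha> = cmp B (f1 P f) h \<longrightarrow> cod2 B \<alpha> = f1 P g \<longrightarrow>
        iso2 B \<alpha>' \<longrightarrow> dom2 B \<alpha>' = cmp B (f1 P f) h' \<longrightarrow> cod2 B \<alpha>' = f1 P g' \<longrightarrow>
        is_lift E B P f g h \<alpha> ht at bt \<longrightarrow>
        is_lift E B P f g' h' \<alpha>' ht' at' bt' \<longrightarrow>
        \<delta> \<in> ce B \<longrightarrow> dom2 B \<delta> = h \<longrightarrow> cod2 B \<delta> = h' \<longrightarrow>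
        vcmp B \<alpha>' (hcmp B (idc B (f1 P f)) \<delta>) = vcmp B (f2 P \<sigma>) \<alpha> \<longrightarrow>
        (\<exists>!\<delta>t. \<delta>t \<in> ce E \<and> dom2 E \<delta>t = ht \<and> cod2 E \<delta>t = ht' \<and>
            vcmp E at' (hcmp E (idc E f) \<delta>t) = vcmp E \<sigma> at \<and>
            vcmp B bt' (f2 P \<delta>t) = vcmp B \<delta> bt))"

text \<open>Each local functor P : E(x,y) -> B(Px,Py) is fibered in groupoids: every
2-cell is cartesian (1-categorically) and every 2-cell of B into P u lifts to a
2-cell into u.  (Two 2-cells with a common codomain lie in the same hom-category.)\<close>

definition locally_fibered_in_groupoids ::
  "('o,'a,'c) bicat \<Rightarrow> ('p,'q,'r) bicat \<Rightarrow> ('o,'a,'c,'p,'q,'r) laxf \<Rightarrow> bool" where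
  "locally_fibered_in_groupoids E B P \<longleftrightarrow>
    (\<forall>\<theta>\<in>ce E. \<forall>\<psi>\<in>ce E. \<forall>\<chi>\<in>ce B.
        cod2 E \<psi> = cod2 E \<theta> \<longrightarrow>
        dom2 B \<chi> = f1 P (dom2 E \<psi>) \<longrightarrow> cod2 B \<chi> = f1 P (dom2 E \<theta>) \<longrightarrow>
        vcmp B (f2 P \<theta>) \<chi> = f2 P \<psi> \<longrightarrow>
        (\<exists>!\<xi>. \<xi> \<in> ce E \<and> dom2 E \<xi> = dom2 E \<psi> \<and> cod2 E \<xi> = dom2 E \<theta> \<and>
             vcmp E \<theta> \<xi> = \<psi> \<and> f2 P \<xi> = \<chi>)) \<and>
    (\<forall>u\<in>ar E. \<forall>\<kappa>\<in>ce B. cod2 B \<kappa> = f1 P u \<longrightarrow>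
        (\<exists>\<theta>\<in>ce E. cod2 E \<theta> = u \<and> f2 P \<theta> = \<kappa>))"

definition fibered_in_pseudogroupoids ::
  "('o,'a,'c) bicat \<Rightarrow> ('p,'q,'r) bicat \<Rightarrow> ('o,'a,'c,'p,'q,'r) laxf \<Rightarrow> bool" where
  "fibered_in_pseudogroupoids E B P \<longleftrightarrow> lax_functor E B P \<and>
    (\<forall>f\<in>ar E. cartesian E B P f) \<and>
    (\<forall>e\<in>ob E. \<forall>f\<in>ar B. btrg B f = fo P e \<longrightarrow> (\<exists>ft\<in>ar E. btrg E ft = e \<and> f1 P ft = f)) \<and>
    locally_fibered_in_groupoids E B P"

text \<open>A cleavage for the local functors: cl u kappa is a chosen lift of
kappa : _ => P u to a 2-cell with codomain u (it is cartesian automatically).\<close>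

definition local_cleavage ::
  "('o,'a,'c) bicat \<Rightarrow> ('p,'q,'r) bicat \<Rightarrow> ('o,'a,'c,'p,'q,'r) laxf \<Rightarrow> ('a \<Rightarrow> 'r \<Rightarrow> 'c) \<Rightarrow> bool" where
  "local_cleavage E B P cl \<longleftrightarrow>
    (\<forall>u\<in>ar E. \<forall>\<kappa>\<in>ce B. cod2 B \<kappa> = f1 P u \<longrightarrow>
        cl u \<kappa> \<in> ce E \<and> cod2 E (cl u \<kappa>) = u \<and> f2 P (cl u \<kappa>) = \<kappa>)"

section \<open>The fiber bicategory P^{-1}(b) (the data relevant to being a pseudogroupoid)\<close>

definition fib_ob where
  "fib_ob E B P b = {e \<in> ob E. fo P e = b}"

definition fib_ar where
  "fib_ar E B P b = {h \<in> ar E. f1 P h = idm B b}"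

definition fib_ce where
  "fib_ce E B P b = {\<alpha> \<in> ce E. f2 P \<alpha> = idc B (idm B b)}"

text \<open>Composite g ^o f: domain of the chosen lift at g o f of
id_b => id_b o id_b = Pg o Pf => P(g o f).\<close>

definition fib_cmp where
  "fib_cmp E B P cl b g f =
     dom2 E (cl (cmp E g f) (vcmp B (phi P g f) (inv2 B (lun B (idm B b)))))"

text \<open>Identity of e in the fiber: domain of the chosen lift at id_e of phi0 e : id_b => P(id_e).\<close>

definition fib_id where
  "fib_id E B P cl e = dom2 E (cl (idm E e) (phi0 P e))"

definition fib_iso where
  "fib_iso E B P b \<alpha> \<longleftrightarrow> \<alpha> \<in> fib_ce E B P b \<and>
     (\<exists>\<beta>\<in>fib_ce E B P b. dom2 E \<beta> = cod2 E \<alpha> \<and> cod2 E \<beta> = dom2 E \<alpha> \<and>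
        vcmp E \<beta> \<alpha> = idc E (dom2 E \<alpha>) \<and> vcmp E \<alpha> \<beta> = idc E (cod2 E \<alpha>))"

definition fiber_is_pseudogroupoid where
  "fiber_is_pseudogroupoid E B P cl b \<longleftrightarrow>
    (\<forall>h\<in>fib_ar E B P b. \<exists>g\<in>fib_ar E B P b.
        bsrc E g = btrg E h \<and> btrg E g = bsrc E h \<and>
        (\<exists>\<alpha>. fib_iso E B P b \<alpha> \<and> dom2 E \<alpha> = fib_cmp E B P cl b g h \<and> cod2 E \<alpha> = fib_id E B P cl (bsrc E h)) \<and>
        (\<exists>\<alpha>. fib_iso E B P b \<alpha> \<and> dom2 E \<alpha> = fib_cmp E B P cl b h g \<and> cod2 E \<alpha> = fib_id E B P cl (btrg E h))) \<and>
    (\<forall>\<alpha>\<in>fib_ce E B P b. fib_iso E B P b \<alpha>)"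

end

theory Submission
  imports Defs
begin



locale bic =
  fixes B :: "('o,'a,'c) bicat"
  assumes bic: "bicat B"
begin

lemma ar_st: "f \<in> ar B \<Longrightarrow> bsrc B f \<in> ob B \<and> btrg B f \<in> ob B"
  using bic[unfolded bicat_def, THEN conjunct1] by blast
lemma ce_typ: "\<alpha> \<in> ce B \<Longrightarrow> dom2 B \<alpha> \<in> ar B \<and> cod2 B \<alpha> \<in> ar B \<and>
        bsrc B (dom2 B \<alpha>) = bsrc B (cod2 B \<alpha>) \<and> btrg B (dom2 B \<alpha>) = btrg B (cod2 B \<alpha>)"
  using bic[unfolded bicat_def, THEN conjunct2, THEN conjunct1] by blast
lemma idm_typ: "x \<in> ob B \<Longrightarrow> idm B x \<in> ar B \<and> bsrc B (idm B x) = x \<and> btrg B (idm B x) = x"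
  using bic[unfolded bicat_def, THEN conjunct2, THEN conjunct2, THEN conjunct1] by blast
lemma cmp_typ: "f\<in>ar B \<Longrightarrow> g\<in>ar B \<Longrightarrow> bsrc B g = btrg B f \<Longrightarrow>
        cmp B g f \<in> ar B \<and> bsrc B (cmp B g f) = bsrc B f \<and> btrg B (cmp B g f) = btrg B g"
  using bic[unfolded bicat_def, THEN conjunct2, THEN conjunct2, THEN conjunct2, THEN conjunct1] by blast
lemma idc_typ: "f\<in>ar B \<Longrightarrow> idc B f \<in> ce B \<and> dom2 B (idc B f) = f \<and> cod2 B (idc B f) = f"
  using bic[unfolded bicat_def, THEN conjunct2, THEN conjunct2, THEN conjunct2, THEN conjunct2, THEN conjunct1] by blast
lemma vcmp_typ: "\<alpha>\<in>ce B \<Longrightarrow> \<beta>\<in>ce B \<Longrightarrow> dom2 B \<beta> = cod2 B \<alpha> \<Longrightarrow>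
        vcmp B \<beta> \<alpha> \<in> ce B \<and> dom2 B (vcmp B \<beta> \<alpha>) = dom2 B \<alpha> \<and> cod2 B (vcmp B \<beta> \<alpha>) = cod2 B \<beta>"
  using bic[unfolded bicat_def, THEN conjunct2, THEN conjunct2, THEN conjunct2, THEN conjunct2, THEN conjunct2, THEN conjunct1] by blast
lemma vcmp_id: "\<alpha>\<in>ce B \<Longrightarrow> vcmp B (idc B (cod2 B \<alpha>)) \<alpha> = \<alpha> \<and> vcmp B \<alpha> (idc B (dom2 B \<alpha>)) = \<alpha>"
  using bic[unfolded bicat_def, THEN conjunct2, THEN conjunct2, THEN conjunct2, THEN conjunct2, THEN conjunct2, THEN conjunct2, THEN conjunct1] by blast
lemma vassoc: "\<alpha>\<in>ce B \<Longrightarrow> \<beta>\<in>ce B \<Longrightarrow> \<gamma>\<in>ce B \<Longrightarrow> dom2 B \<beta> = cod2 B \<alpha> \<Longrightarrow> dom2 B \<gamma> = cod2 B \<beta> \<Longrightarrow>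
        vcmp B \<gamma> (vcmp B \<beta> \<alpha>) = vcmp B (vcmp B \<gamma> \<beta>) \<alpha>"
  using bic[unfolded bicat_def, THEN conjunct2, THEN conjunct2, THEN conjunct2, THEN conjunct2, THEN conjunct2, THEN conjunct2, THEN conjunct2, THEN conjunct1] by blast
lemma hcmp_typ: "\<alpha>\<in>ce B \<Longrightarrow> \<beta>\<in>ce B \<Longrightarrow> bsrc B (dom2 B \<beta>) = btrg B (dom2 B \<alpha>) \<Longrightarrow>
        hcmp B \<beta> \<alpha> \<in> ce B \<and> dom2 B (hcmp B \<beta> \<alpha>) = cmp B (dom2 B \<beta>) (dom2 B \<alpha>) \<and>
        cod2 B (hcmp B \<beta> \<alpha>) = cmp B (cod2 B \<beta>) (cod2 B \<alpha>)"
  using bic[unfolded bicat_def, THEN conjunct2, THEN conjunct2, THEN conjunct2, THEN conjunct2, THEN conjunct2, THEN conjunct2, THEN conjunct2, THEN conjunct2, THEN conjunct1] by blast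
lemma hcmp_idc: "f\<in>ar B \<Longrightarrow> g\<in>ar B \<Longrightarrow> bsrc B g = btrg B f \<Longrightarrow> hcmp B (idc B g) (idc B f) = idc B (cmp B g f)"
  using bic[unfolded bicat_def, THEN conjunct2, THEN conjunct2, THEN conjunct2, THEN conjunct2, THEN conjunct2, THEN conjunct2, THEN conjunct2, THEN conjunct2, THEN conjunct2, THEN conjunct1] by blast
lemma interchange: "\<alpha>\<in>ce B \<Longrightarrow> \<alpha>'\<in>ce B \<Longrightarrow> \<beta>\<in>ce B \<Longrightarrow> \<beta>'\<in>ce B \<Longrightarrow>
        dom2 B \<alpha>' = cod2 B \<alpha> \<Longrightarrow> dom2 B \<beta>' = cod2 B \<beta> \<Longrightarrow> bsrc B (dom2 B \<beta>) = btrg B (dom2 B \<alpha>) \<Longrightarrow>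
        hcmp B (vcmp B \<beta>' \<beta>) (vcmp B \<alpha>' \<alpha>) = vcmp B (hcmp B \<beta>' \<alpha>') (hcmp B \<beta> \<alpha>)"
  using bic[unfolded bicat_def, THEN conjunct2, THEN conjunct2, THEN conjunct2, THEN conjunct2, THEN conjunct2, THEN conjunct2, THEN conjunct2, THEN conjunct2, THEN conjunct2, THEN conjunct2, THEN conjunct1] by blast
lemma asc_typ: "f\<in>ar B \<Longrightarrow> g\<in>ar B \<Longrightarrow> h\<in>ar B \<Longrightarrow> bsrc B g = btrg B f \<Longrightarrow> bsrc B h = btrg B g \<Longrightarrow>
        iso2 B (asc B h g f) \<and> dom2 B (asc B h g f) = cmp B (cmp B h g) f \<and>
        cod2 B (asc B h g f) = cmp B h (cmp B g f)"
  using bic[unfolded bicat_def, THEN conjunct2, THEN conjunct2, THEN conjunct2, THEN conjunct2, THEN conjunct2, THEN conjunct2, THEN conjunct2, THEN conjunct2, THEN conjunct2, THEN conjunct2, THEN conjunct2, THEN conjunct1] by blast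
lemma asc_nat: "\<alpha>\<in>ce B \<Longrightarrow> \<beta>\<in>ce B \<Longrightarrow> \<gamma>\<in>ce B \<Longrightarrow>
        bsrc B (dom2 B \<beta>) = btrg B (dom2 B \<alpha>) \<Longrightarrow> bsrc B (dom2 B \<gamma>) = btrg B (dom2 B \<beta>) \<Longrightarrow>
        vcmp B (asc B (cod2 B \<gamma>) (cod2 B \<beta>) (cod2 B \<alpha>)) (hcmp B (hcmp B \<gamma> \<beta>) \<alpha>) =
        vcmp B (hcmp B \<gamma> (hcmp B \<beta> \<alpha>)) (asc B (dom2 B \<gamma>) (dom2 B \<beta>) (dom2 B \<alpha>))"
  using bic[unfolded bicat_def, THEN conjunct2, THEN conjunct2, THEN conjunct2, THEN conjunct2, THEN conjunct2, THEN conjunct2, THEN conjunct2, THEN conjunct2, THEN conjunct2, THEN conjunct2, THEN conjunct2, THEN conjunct2, THEN conjunct1] by blast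
lemma lun_typ: "f\<in>ar B \<Longrightarrow> iso2 B (lun B f) \<and> dom2 B (lun B f) = cmp B (idm B (btrg B f)) f \<and> cod2 B (lun B f) = f"
  using bic[unfolded bicat_def, THEN conjunct2, THEN conjunct2, THEN conjunct2, THEN conjunct2, THEN conjunct2, THEN conjunct2, THEN conjunct2, THEN conjunct2, THEN conjunct2, THEN conjunct2, THEN conjunct2, THEN conjunct2, THEN conjunct2, THEN conjunct1] by blast
lemma run_typ: "f\<in>ar B \<Longrightarrow> iso2 B (run B f) \<and> dom2 B (run B f) = cmp B f (idm B (bsrc B f)) \<and> cod2 B (run B f) = f"
  using bic[unfolded bicat_def, THEN conjunct2, THEN conjunct2, THEN conjunct2, THEN conjunct2, THEN conjunct2, THEN conjunct2, THEN conjunct2, THEN conjunct2, THEN conjunct2, THEN conjunct2, THEN conjunct2, THEN conjunct2, THEN conjunct2, THEN conjunct2, THEN conjunct1] by blast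
lemma lun_nat: "\<alpha>\<in>ce B \<Longrightarrow> vcmp B \<alpha> (lun B (dom2 B \<alpha>)) =
        vcmp B (lun B (cod2 B \<alpha>)) (hcmp B (idc B (idm B (btrg B (dom2 B \<alpha>)))) \<alpha>)"
  using bic[unfolded bicat_def, THEN conjunct2, THEN conjunct2, THEN conjunct2, THEN conjunct2, THEN conjunct2, THEN conjunct2, THEN conjunct2, THEN conjunct2, THEN conjunct2, THEN conjunct2, THEN conjunct2, THEN conjunct2, THEN conjunct2, THEN conjunct2, THEN conjunct2, THEN conjunct1] by blast
lemma run_nat: "\<alpha>\<in>ce B \<Longrightarrow> vcmp B \<alpha> (run B (dom2 B \<alpha>)) =
        vcmp B (run B (cod2 B \<alpha>)) (hcmp B \<alpha> (idc B (idm B (bsrc B (dom2 B \<alpha>)))))"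
  using bic[unfolded bicat_def, THEN conjunct2, THEN conjunct2, THEN conjunct2, THEN conjunct2, THEN conjunct2, THEN conjunct2, THEN conjunct2, THEN conjunct2, THEN conjunct2, THEN conjunct2, THEN conjunct2, THEN conjunct2, THEN conjunct2, THEN conjunct2, THEN conjunct2, THEN conjunct2, THEN conjunct1] by blast
lemma pentagon: "f\<in>ar B \<Longrightarrow> g\<in>ar B \<Longrightarrow> h\<in>ar B \<Longrightarrow> k\<in>ar B \<Longrightarrow>
        bsrc B g = btrg B f \<Longrightarrow> bsrc B h = btrg B g \<Longrightarrow> bsrc B k = btrg B h \<Longrightarrow>
        vcmp B (hcmp B (idc B k) (asc B h g f))
          (vcmp B (asc B k (cmp B h g) f) (hcmp B (asc B k h g) (idc B f))) =
        vcmp B (asc B k h (cmp B g f)) (asc B (cmp B k h) g f)"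
  using bic[unfolded bicat_def, THEN conjunct2, THEN conjunct2, THEN conjunct2, THEN conjunct2, THEN conjunct2, THEN conjunct2, THEN conjunct2, THEN conjunct2, THEN conjunct2, THEN conjunct2, THEN conjunct2, THEN conjunct2, THEN conjunct2, THEN conjunct2, THEN conjunct2, THEN conjunct2, THEN conjunct2, THEN conjunct1] by blast
lemma triangle: "f\<in>ar B \<Longrightarrow> g\<in>ar B \<Longrightarrow> bsrc B g = btrg B f \<Longrightarrow>
        vcmp B (hcmp B (idc B g) (lun B f)) (asc B g (idm B (btrg B f)) f) =
        hcmp B (run B g) (idc B f)"
  using bic[unfolded bicat_def, THEN conjunct2, THEN conjunct2, THEN conjunct2, THEN conjunct2, THEN conjunct2, THEN conjunct2, THEN conjunct2, THEN conjunct2, THEN conjunct2, THEN conjunct2, THEN conjunct2, THEN conjunct2, THEN conjunct2, THEN conjunct2, THEN conjunct2, THEN conjunct2, THEN conjunct2, THEN conjunct2] by blast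

lemma T_idm[simp]: "x \<in> ob B \<Longrightarrow> idm B x \<in> ar B" "x \<in> ob B \<Longrightarrow> bsrc B (idm B x) = x"
   "x \<in> ob B \<Longrightarrow> btrg B (idm B x) = x"
  using idm_typ by auto
lemma T_ce[simp]: "\<alpha> \<in> ce B \<Longrightarrow> dom2 B \<alpha> \<in> ar B" "\<alpha> \<in> ce B \<Longrightarrow> cod2 B \<alpha> \<in> ar B"
  "\<alpha> \<in> ce B \<Longrightarrow> bsrc B (cod2 B \<alpha>) = bsrc B (dom2 B \<alpha>)"
  "\<alpha> \<in> ce B \<Longrightarrow> btrg B (cod2 B \<alpha>) = btrg B (dom2 B \<alpha>)"
  using ce_typ by auto
lemma T_ar[simp]: "f \<in> ar B \<Longrightarrow> bsrc B f \<in> ob B" "f \<in> ar B \<Longrightarrow> btrg B f \<in> ob B"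
  using ar_st by auto
lemma T_cmp[simp]: "f\<in>ar B \<Longrightarrow> g\<in>ar B \<Longrightarrow> bsrc B g = btrg B f \<Longrightarrow> cmp B g f \<in> ar B"
  "f\<in>ar B \<Longrightarrow> g\<in>ar B \<Longrightarrow> bsrc B g = btrg B f \<Longrightarrow> bsrc B (cmp B g f) = bsrc B f"
  "f\<in>ar B \<Longrightarrow> g\<in>ar B \<Longrightarrow> bsrc B g = btrg B f \<Longrightarrow> btrg B (cmp B g f) = btrg B g"
  using cmp_typ by auto
lemma T_idc[simp]: "f\<in>ar B \<Longrightarrow> idc B f \<in> ce B" "f\<in>ar B \<Longrightarrow> dom2 B (idc B f) = f"
  "f\<in>ar B \<Longrightarrow> cod2 B (idc B f) = f"
  using idc_typ by auto
lemma T_vcmp[simp]: "\<alpha>\<in>ce B \<Longrightarrow> \<beta>\<in>ce B \<Longrightarrow> dom2 B \<beta> = cod2 B \<alpha> \<Longrightarrow> vcmp B \<beta> \<alpha> \<in> ce B"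
  "\<alpha>\<in>ce B \<Longrightarrow> \<beta>\<in>ce B \<Longrightarrow> dom2 B \<beta> = cod2 B \<alpha> \<Longrightarrow> dom2 B (vcmp B \<beta> \<alpha>) = dom2 B \<alpha>"
  "\<alpha>\<in>ce B \<Longrightarrow> \<beta>\<in>ce B \<Longrightarrow> dom2 B \<beta> = cod2 B \<alpha> \<Longrightarrow> cod2 B (vcmp B \<beta> \<alpha>) = cod2 B \<beta>"
  using vcmp_typ by auto
lemma T_hcmp[simp]: "\<alpha>\<in>ce B \<Longrightarrow> \<beta>\<in>ce B \<Longrightarrow> bsrc B (dom2 B \<beta>) = btrg B (dom2 B \<alpha>) \<Longrightarrow> hcmp B \<beta> \<alpha> \<in> ce B"
  "\<alpha>\<in>ce B \<Longrightarrow> \<beta>\<in>ce B \<Longrightarrow> bsrc B (dom2 B \<beta>) = btrg B (dom2 B \<alpha>) \<Longrightarrow> dom2 B (hcmp B \<beta> \<alpha>) = cmp B (dom2 B \<beta>) (dom2 B \<alpha>)"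
  "\<alpha>\<in>ce B \<Longrightarrow> \<beta>\<in>ce B \<Longrightarrow> bsrc B (dom2 B \<beta>) = btrg B (dom2 B \<alpha>) \<Longrightarrow> cod2 B (hcmp B \<beta> \<alpha>) = cmp B (cod2 B \<beta>) (cod2 B \<alpha>)"
  using hcmp_typ by auto
lemma T_iso[simp]: "iso2 B \<alpha> \<Longrightarrow> \<alpha> \<in> ce B"
  unfolding iso2_def by auto
lemma T_asc[simp]: "f\<in>ar B \<Longrightarrow> g\<in>ar B \<Longrightarrow> h\<in>ar B \<Longrightarrow> bsrc B g = btrg B f \<Longrightarrow> bsrc B h = btrg B g \<Longrightarrow> asc B h g f \<in> ce B"
  "f\<in>ar B \<Longrightarrow> g\<in>ar B \<Longrightarrow> h\<in>ar B \<Longrightarrow> bsrc B g = btrg B f \<Longrightarrow> bsrc B h = btrg B g \<Longrightarrow> dom2 B (asc B h g f) = cmp B (cmp B h g) f"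
  "f\<in>ar B \<Longrightarrow> g\<in>ar B \<Longrightarrow> h\<in>ar B \<Longrightarrow> bsrc B g = btrg B f \<Longrightarrow> bsrc B h = btrg B g \<Longrightarrow> cod2 B (asc B h g f) = cmp B h (cmp B g f)"
  using asc_typ by auto
lemma T_lun[simp]: "f\<in>ar B \<Longrightarrow> lun B f \<in> ce B" "f\<in>ar B \<Longrightarrow> dom2 B (lun B f) = cmp B (idm B (btrg B f)) f"
  "f\<in>ar B \<Longrightarrow> cod2 B (lun B f) = f"
  using lun_typ by auto
lemma T_run[simp]: "f\<in>ar B \<Longrightarrow> run B f \<in> ce B" "f\<in>ar B \<Longrightarrow> dom2 B (run B f) = cmp B f (idm B (bsrc B f))"
  "f\<in>ar B \<Longrightarrow> cod2 B (run B f) = f"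
  using run_typ by auto
lemma iso_asc: "f\<in>ar B \<Longrightarrow> g\<in>ar B \<Longrightarrow> h\<in>ar B \<Longrightarrow> bsrc B g = btrg B f \<Longrightarrow> bsrc B h = btrg B g \<Longrightarrow> iso2 B (asc B h g f)"
  using asc_typ by auto
lemma iso_lun: "f\<in>ar B \<Longrightarrow> iso2 B (lun B f)" using lun_typ by auto
lemma iso_run: "f\<in>ar B \<Longrightarrow> iso2 B (run B f)" using run_typ by auto

lemma vid_l[simp]: "\<alpha>\<in>ce B \<Longrightarrow> cod2 B \<alpha> = f \<Longrightarrow> vcmp B (idc B f) \<alpha> = \<alpha>"
  using vcmp_id by auto
lemma vid_r[simp]: "\<alpha>\<in>ce B \<Longrightarrow> dom2 B \<alpha> = f \<Longrightarrow> vcmp B \<alpha> (idc B f) = \<alpha>"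
  using vcmp_id by auto

end


context bic begin
lemma inv_unique:
  assumes "\<alpha> \<in> ce B"
    and "\<beta> \<in> ce B" "dom2 B \<beta> = cod2 B \<alpha>" "cod2 B \<beta> = dom2 B \<alpha>" "vcmp B \<beta> \<alpha> = idc B (dom2 B \<alpha>)"
    and "\<beta>' \<in> ce B" "dom2 B \<beta>' = cod2 B \<alpha>" "cod2 B \<beta>' = dom2 B \<alpha>" "vcmp B \<alpha> \<beta>' = idc B (cod2 B \<alpha>)"
  shows "\<beta> = \<beta>'"
proof -
  have "\<beta> = vcmp B \<beta> (vcmp B \<alpha> \<beta>')" using assms by simp
  also have "\<dots> = vcmp B (vcmp B \<beta> \<alpha>) \<beta>'" using assms by (intro vassoc) auto
  also have "\<dots> = \<beta>'" using assms by simp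
  finally show ?thesis .
qed

lemma inv_props:
  assumes "iso2 B \<alpha>"
  shows "inv2 B \<alpha> \<in> ce B \<and> dom2 B (inv2 B \<alpha>) = cod2 B \<alpha> \<and> cod2 B (inv2 B \<alpha>) = dom2 B \<alpha> \<and>
        vcmp B (inv2 B \<alpha>) \<alpha> = idc B (dom2 B \<alpha>) \<and> vcmp B \<alpha> (inv2 B \<alpha>) = idc B (cod2 B \<alpha>)"
proof -
  have ex: "\<exists>!\<beta>. \<beta> \<in> ce B \<and> dom2 B \<beta> = cod2 B \<alpha> \<and> cod2 B \<beta> = dom2 B \<alpha> \<and>
        vcmp B \<beta> \<alpha> = idc B (dom2 B \<alpha>) \<and> vcmp B \<alpha> \<beta> = idc B (cod2 B \<alpha>)"
    using assms inv_unique unfolding iso2_def by (metis (no_types, lifting))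
  show ?thesis unfolding inv2_def by (rule theI'[OF ex])
qed

lemma T_inv[simp]: "iso2 B \<alpha> \<Longrightarrow> inv2 B \<alpha> \<in> ce B" "iso2 B \<alpha> \<Longrightarrow> dom2 B (inv2 B \<alpha>) = cod2 B \<alpha>"
  "iso2 B \<alpha> \<Longrightarrow> cod2 B (inv2 B \<alpha>) = dom2 B \<alpha>"
  using inv_props by auto
lemma inv_l[simp]: "iso2 B \<alpha> \<Longrightarrow> vcmp B (inv2 B \<alpha>) \<alpha> = idc B (dom2 B \<alpha>)"
  using inv_props by auto
lemma inv_r[simp]: "iso2 B \<alpha> \<Longrightarrow> vcmp B \<alpha> (inv2 B \<alpha>) = idc B (cod2 B \<alpha>)"
  using inv_props by auto

lemma iso_inv: assumes "iso2 B \<alpha>" shows "iso2 B (inv2 B \<alpha>)"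
proof -
  have "\<alpha> \<in> ce B \<and> dom2 B \<alpha> = cod2 B (inv2 B \<alpha>) \<and> cod2 B \<alpha> = dom2 B (inv2 B \<alpha>) \<and>
        vcmp B \<alpha> (inv2 B \<alpha>) = idc B (dom2 B (inv2 B \<alpha>)) \<and> vcmp B (inv2 B \<alpha>) \<alpha> = idc B (cod2 B (inv2 B \<alpha>))"
    using inv_props[OF assms] assms by simp
  then show ?thesis unfolding iso2_def using inv_props[OF assms] by blast
qed

lemma iso_idc: assumes "f \<in> ar B" shows "iso2 B (idc B f)"
proof -
  have "idc B f \<in> ce B \<and> dom2 B (idc B f) = cod2 B (idc B f) \<and> cod2 B (idc B f) = dom2 B (idc B f) \<and>
        vcmp B (idc B f) (idc B f) = idc B (dom2 B (idc B f)) \<and> vcmp B (idc B f) (idc B f) = idc B (cod2 B (idc B f))"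
    using assms by simp
  then show ?thesis unfolding iso2_def by blast
qed

lemma inv_idc: assumes "f \<in> ar B" shows "inv2 B (idc B f) = idc B f"
proof -
  have i: "iso2 B (idc B f)" by (rule iso_idc[OF assms])
  show ?thesis
    apply (rule inv_unique[of "idc B f" "inv2 B (idc B f)" "idc B f"])
    using assms inv_props[OF i] by simp_all
qed

lemma vassoc': "\<alpha>\<in>ce B \<Longrightarrow> \<beta>\<in>ce B \<Longrightarrow> \<gamma>\<in>ce B \<Longrightarrow> dom2 B \<beta> = cod2 B \<alpha> \<Longrightarrow> dom2 B \<gamma> = cod2 B \<beta> \<Longrightarrow>
        vcmp B (vcmp B \<gamma> \<beta>) \<alpha> = vcmp B \<gamma> (vcmp B \<beta> \<alpha>)"
  using vassoc by simp

lemma iso_vcmp: assumes "iso2 B \<alpha>" "iso2 B \<beta>" "dom2 B \<beta> = cod2 B \<alpha>" shows "iso2 B (vcmp B \<beta> \<alpha>)"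
proof -
  let ?i = "vcmp B (inv2 B \<alpha>) (inv2 B \<beta>)"
  have ce: "\<alpha> \<in> ce B" "\<beta> \<in> ce B" using assms by auto
  have d: "dom2 B (vcmp B \<beta> \<alpha>) = dom2 B \<alpha>" "cod2 B (vcmp B \<beta> \<alpha>) = cod2 B \<beta>" using assms by auto
  have a: "vcmp B ?i (vcmp B \<beta> \<alpha>) = idc B (dom2 B \<alpha>)"
  proof -
    have "vcmp B ?i (vcmp B \<beta> \<alpha>) = vcmp B (inv2 B \<alpha>) (vcmp B (inv2 B \<beta>) (vcmp B \<beta> \<alpha>))"
      using assms by (subst vassoc') auto
    also have "\<dots> = vcmp B (inv2 B \<alpha>) (vcmp B (vcmp B (inv2 B \<beta>) \<beta>) \<alpha>)"
      using assms by (subst vassoc) auto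
    also have "\<dots> = idc B (dom2 B \<alpha>)" using assms by simp
    finally show ?thesis .
  qed
  have b: "vcmp B (vcmp B \<beta> \<alpha>) ?i = idc B (cod2 B \<beta>)"
  proof -
    have "vcmp B (vcmp B \<beta> \<alpha>) ?i = vcmp B \<beta> (vcmp B \<alpha> ?i)"
      using assms by (subst vassoc') auto
    also have "\<dots> = vcmp B \<beta> (vcmp B (vcmp B \<alpha> (inv2 B \<alpha>)) (inv2 B \<beta>))"
      using assms by (subst vassoc) auto
    also have "\<dots> = idc B (cod2 B \<beta>)" using assms by simp
    finally show ?thesis .
  qed
  have "?i \<in> ce B" "dom2 B ?i = cod2 B \<beta>" "cod2 B ?i = dom2 B \<alpha>" "vcmp B \<beta> \<alpha> \<in> ce B"
    using assms by simp_all
  then show ?thesis unfolding iso2_def d using a b by blast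
qed

lemma iso_hcmp: assumes "iso2 B \<alpha>" "iso2 B \<beta>" "bsrc B (dom2 B \<beta>) = btrg B (dom2 B \<alpha>)"
  shows "iso2 B (hcmp B \<beta> \<alpha>)"
proof -
  let ?i = "hcmp B (inv2 B \<beta>) (inv2 B \<alpha>)"
  have d: "dom2 B (hcmp B \<beta> \<alpha>) = cmp B (dom2 B \<beta>) (dom2 B \<alpha>)"
     "cod2 B (hcmp B \<beta> \<alpha>) = cmp B (cod2 B \<beta>) (cod2 B \<alpha>)" using assms by auto
  have a: "vcmp B ?i (hcmp B \<beta> \<alpha>) = idc B (cmp B (dom2 B \<beta>) (dom2 B \<alpha>))"
    using assms by (simp add: interchange[symmetric] hcmp_idc)
  have b: "vcmp B (hcmp B \<beta> \<alpha>) ?i = idc B (cmp B (cod2 B \<beta>) (cod2 B \<alpha>))"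
    using assms by (simp add: interchange[symmetric] hcmp_idc)
  have "?i \<in> ce B" "dom2 B ?i = cmp B (cod2 B \<beta>) (cod2 B \<alpha>)" "cod2 B ?i = cmp B (dom2 B \<beta>) (dom2 B \<alpha>)"
      "hcmp B \<beta> \<alpha> \<in> ce B"
    using assms by simp_all
  then show ?thesis unfolding iso2_def d using a b by blast
qed

lemma cancel_l: assumes "iso2 B \<alpha>" "x \<in> ce B" "y \<in> ce B" "cod2 B x = dom2 B \<alpha>" "cod2 B y = dom2 B \<alpha>"
  "vcmp B \<alpha> x = vcmp B \<alpha> y" shows "x = y"
proof -
  have "x = vcmp B (vcmp B (inv2 B \<alpha>) \<alpha>) x" using assms by simp
  also have "\<dots> = vcmp B (inv2 B \<alpha>) (vcmp B \<alpha> x)" using assms by (subst vassoc') auto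
  also have "\<dots> = vcmp B (inv2 B \<alpha>) (vcmp B \<alpha> y)" using assms by simp
  also have "\<dots> = vcmp B (vcmp B (inv2 B \<alpha>) \<alpha>) y" using assms by (subst vassoc) auto
  also have "\<dots> = y" using assms by simp
  finally show ?thesis .
qed

lemma cancel_r: assumes "iso2 B \<alpha>" "x \<in> ce B" "y \<in> ce B" "dom2 B x = cod2 B \<alpha>" "dom2 B y = cod2 B \<alpha>"
  "vcmp B x \<alpha> = vcmp B y \<alpha>" shows "x = y"
proof -
  have "x = vcmp B x (vcmp B \<alpha> (inv2 B \<alpha>))" using assms by simp
  also have "\<dots> = vcmp B (vcmp B x \<alpha>) (inv2 B \<alpha>)" using assms by (subst vassoc) auto
  also have "\<dots> = vcmp B (vcmp B y \<alpha>) (inv2 B \<alpha>)" using assms by simp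
  also have "\<dots> = vcmp B y (vcmp B \<alpha> (inv2 B \<alpha>))" using assms by (subst vassoc') auto
  also have "\<dots> = y" using assms by simp
  finally show ?thesis .
qed

end


context bic begin
lemma wl: assumes "g \<in> ar B" "X \<in> ce B" "Y \<in> ce B" "dom2 B X = cod2 B Y" "bsrc B g = btrg B (dom2 B Y)" shows
   "hcmp B (idc B g) (vcmp B X Y) = vcmp B (hcmp B (idc B g) X) (hcmp B (idc B g) Y)"
proof -
  have e: "hcmp B (vcmp B (idc B g) (idc B g)) (vcmp B X Y) = vcmp B (hcmp B (idc B g) X) (hcmp B (idc B g) Y)"
    by (rule interchange) (use assms in simp_all)
  have "vcmp B (idc B g) (idc B g) = idc B g" using assms by simp
  then show ?thesis using e by simp
qed
lemma wr: assumes "f \<in> ar B" "X \<in> ce B" "Y \<in> ce B" "dom2 B X = cod2 B Y" "bsrc B (dom2 B Y) = btrg B f" shows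
   "hcmp B (vcmp B X Y) (idc B f) = vcmp B (hcmp B X (idc B f)) (hcmp B Y (idc B f))"
proof -
  have e: "hcmp B (vcmp B X Y) (vcmp B (idc B f) (idc B f)) = vcmp B (hcmp B X (idc B f)) (hcmp B Y (idc B f))"
    by (rule interchange) (use assms in simp_all)
  have "vcmp B (idc B f) (idc B f) = idc B f" using assms by simp
  then show ?thesis using e by simp
qed

lemma faithful_l: assumes "x \<in> ob B" "\<zeta> \<in> ce B" "\<eta> \<in> ce B" "dom2 B \<zeta> = dom2 B \<eta>" "cod2 B \<zeta> = cod2 B \<eta>"
  "btrg B (dom2 B \<zeta>) = x" "hcmp B (idc B (idm B x)) \<zeta> = hcmp B (idc B (idm B x)) \<eta>"
  shows "\<zeta> = \<eta>"
proof -
  have 1: "vcmp B \<zeta> (lun B (dom2 B \<zeta>)) =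
        vcmp B (lun B (cod2 B \<zeta>)) (hcmp B (idc B (idm B (btrg B (dom2 B \<zeta>)))) \<zeta>)"
    by (rule lun_nat) fact
  have 2: "vcmp B \<eta> (lun B (dom2 B \<eta>)) =
        vcmp B (lun B (cod2 B \<eta>)) (hcmp B (idc B (idm B (btrg B (dom2 B \<eta>)))) \<eta>)"
    by (rule lun_nat) fact
  have "vcmp B \<zeta> (lun B (dom2 B \<zeta>)) = vcmp B \<eta> (lun B (dom2 B \<zeta>))"
    using 1 2 assms(4-7) by simp
  then show ?thesis
    apply (rule cancel_r[OF iso_lun[of "dom2 B \<zeta>"], rotated -1])
    using assms by simp_all
qed

end


context bic begin
lemma lun_eq_run: assumes x: "x \<in> ob B" shows "lun B (idm B x) = run B (idm B x)"
proof -
  define I where "I = idm B x"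
  define i where "i = idc B I"
  define L where "L = lun B I"
  define R where "R = run B I"
  define II where "II = cmp B I I"
  define a where "a = asc B I I I"
  define A0 where "A0 = hcmp B a i"
  define A1 where "A1 = asc B I II I"
  have I: "I \<in> ar B" "bsrc B I = x" "btrg B I = x" "idm B x = I" using x by (simp_all add: I_def)
  have II: "II \<in> ar B" "bsrc B II = x" "btrg B II = x" using I by (simp_all add: II_def)
  have i: "i \<in> ce B" "dom2 B i = I" "cod2 B i = I" using I by (simp_all add: i_def)
  have L: "L \<in> ce B" "dom2 B L = II" "cod2 B L = I" "iso2 B L" using I by (simp_all add: L_def II_def iso_lun)
  have R: "R \<in> ce B" "dom2 B R = II" "cod2 B R = I" "iso2 B R" using I by (simp_all add: R_def II_def iso_run)
  have a: "a \<in> ce B" "dom2 B a = cmp B II I" "cod2 B a = cmp B I II" "iso2 B a"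
    using I by (simp_all add: a_def II_def iso_asc)
  have A0: "A0 \<in> ce B" "dom2 B A0 = cmp B (cmp B II I) I" "cod2 B A0 = cmp B (cmp B I II) I"
    using a i I II by (simp_all add: A0_def)
  have A0i: "iso2 B A0" unfolding A0_def i_def
    by (rule iso_hcmp) (use a I II in \<open>simp_all add: iso_idc II_def\<close>)
  have A1: "A1 \<in> ce B" "dom2 B A1 = cmp B (cmp B I II) I" "cod2 B A1 = cmp B I (cmp B II I)" "iso2 B A1"
    using I II by (simp_all add: A1_def II_def iso_asc)
  have lII: "lun B II \<in> ce B" "dom2 B (lun B II) = cmp B I II" "cod2 B (lun B II) = II"
    using II I by simp_all
  have P: "vcmp B (hcmp B i a) (vcmp B A1 A0) = vcmp B (asc B I I II) (asc B II I I)"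
    unfolding a_def A0_def A1_def i_def II_def by (rule pentagon) (use I II in \<open>simp_all add: II_def\<close>)
  have T1': "vcmp B (hcmp B (idc B I) (lun B II)) (asc B I (idm B (btrg B II)) II) = hcmp B (run B I) (idc B II)"
    by (rule triangle) (use I II in \<open>simp_all add: II_def\<close>)
  have T1: "vcmp B (hcmp B i (lun B II)) (asc B I I II) = hcmp B R (idc B II)"
    using T1' unfolding i_def R_def II(3) I(4) .
  have N1': "vcmp B (asc B (cod2 B R) (cod2 B i) (cod2 B i)) (hcmp B (hcmp B R i) i) =
        vcmp B (hcmp B R (hcmp B i i)) (asc B (dom2 B R) (dom2 B i) (dom2 B i))"
    by (rule asc_nat) (use I R i II in \<open>simp_all add: II_def\<close>)
  have N1: "vcmp B a (hcmp B (hcmp B R i) i) = vcmp B (hcmp B R (hcmp B i i)) (asc B II I I)"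
    using N1' unfolding R(2,3) i(2,3) a_def .
  have T0': "vcmp B (hcmp B (idc B I) (lun B I)) (asc B I (idm B (btrg B I)) I) = hcmp B (run B I) (idc B I)"
    by (rule triangle) (use I II in \<open>simp_all add: II_def\<close>)
  have T0: "vcmp B (hcmp B i L) a = hcmp B R i"
    using T0' unfolding a_def i_def L_def R_def I(3,4) .
  have N2': "vcmp B (asc B (cod2 B i) (cod2 B L) (cod2 B i)) (hcmp B (hcmp B i L) i) =
        vcmp B (hcmp B i (hcmp B L i)) (asc B (dom2 B i) (dom2 B L) (dom2 B i))"
    by (rule asc_nat) (use I L i II in \<open>simp_all add: II_def\<close>)
  have N2: "vcmp B a (hcmp B (hcmp B i L) i) = vcmp B (hcmp B i (hcmp B L i)) A1"
    using N2' unfolding L(2,3) i(2,3) a_def A1_def .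
  have ii: "hcmp B i i = idc B II" unfolding i_def II_def by (rule hcmp_idc) (use I II in \<open>simp_all add: II_def\<close>)
  have K0: "vcmp B (hcmp B i (vcmp B (lun B II) a)) (vcmp B A1 A0) = vcmp B (hcmp B i (hcmp B L i)) (vcmp B A1 A0)"
  proof -
    have "vcmp B (hcmp B i (vcmp B (lun B II) a)) (vcmp B A1 A0)
        = vcmp B (vcmp B (hcmp B i (lun B II)) (hcmp B i a)) (vcmp B A1 A0)"
      unfolding i_def by (subst wl) (use I a lII II in \<open>simp_all add: II_def\<close>)
    also have "\<dots> = vcmp B (hcmp B i (lun B II)) (vcmp B (hcmp B i a) (vcmp B A1 A0))"
      by (rule vassoc') (use I i a lII A0 A1 II in \<open>simp_all add: II_def\<close>)
    also have "\<dots> = vcmp B (hcmp B i (lun B II)) (vcmp B (asc B I I II) (asc B II I I))"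
      by (simp only: P)
    also have "\<dots> = vcmp B (vcmp B (hcmp B i (lun B II)) (asc B I I II)) (asc B II I I)"
      by (rule vassoc) (use I i II lII in \<open>simp_all add: II_def\<close>)
    also have "\<dots> = vcmp B (hcmp B R (hcmp B i i)) (asc B II I I)"
      by (simp only: T1 ii)
    also have "\<dots> = vcmp B a (hcmp B (hcmp B R i) i)"
      by (simp only: N1)
    also have "\<dots> = vcmp B a (hcmp B (vcmp B (hcmp B i L) a) i)"
      by (simp only: T0)
    also have "\<dots> = vcmp B a (vcmp B (hcmp B (hcmp B i L) i) A0)"
      unfolding A0_def i_def by (subst wr) (use I L a II in \<open>simp_all add: II_def\<close>)
    also have "\<dots> = vcmp B (vcmp B a (hcmp B (hcmp B i L) i)) A0"
      by (rule vassoc) (use I L a i A0 II in \<open>simp_all add: II_def\<close>)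
    also have "\<dots> = vcmp B (vcmp B (hcmp B i (hcmp B L i)) A1) A0"
      by (simp only: N2)
    also have "\<dots> = vcmp B (hcmp B i (hcmp B L i)) (vcmp B A1 A0)"
      by (rule vassoc') (use I L i A0 A1 II in \<open>simp_all add: II_def\<close>)
    finally show ?thesis .
  qed
  have iA: "iso2 B (vcmp B A1 A0)" by (rule iso_vcmp) (use A0 A0i A1 II in \<open>simp_all add: II_def\<close>)
  have K1: "hcmp B i (vcmp B (lun B II) a) = hcmp B i (hcmp B L i)"
    by (rule cancel_r[OF iA _ _ _ _ K0]) (use I L i A0 A1 a lII II in \<open>simp_all add: II_def\<close>)
  have K: "vcmp B (lun B II) a = hcmp B L i"
  proof -
    have K1': "hcmp B (idc B (idm B x)) (vcmp B (lun B II) a) = hcmp B (idc B (idm B x)) (hcmp B L i)"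
      using K1 unfolding i_def I(4) .
    show ?thesis
    by (rule faithful_l[OF x _ _ _ _ _ K1']) (use I L i a lII II in \<open>simp_all add: II_def\<close>)
  qed
  have lII': "lun B II = hcmp B i L"
  proof -
    have n: "vcmp B L (lun B (dom2 B L)) =
        vcmp B (lun B (cod2 B L)) (hcmp B (idc B (idm B (btrg B (dom2 B L)))) L)"
      by (rule lun_nat) (fact L(1))
    have "vcmp B L (lun B II) = vcmp B L (hcmp B i L)"
      using n unfolding L(2,3) II(3) I(4) L_def[symmetric] i_def[symmetric] .
    then show ?thesis
      by (rule cancel_l[OF L(4), rotated -1]) (use L i lII I II in \<open>simp_all add: II_def\<close>)
  qed
  have RL: "hcmp B R i = hcmp B L i" using T0 K lII' by simp
  have n1: "vcmp B L (run B (dom2 B L)) =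
        vcmp B (run B (cod2 B L)) (hcmp B L (idc B (idm B (bsrc B (dom2 B L)))))"
    by (rule run_nat) (fact L(1))
  have n2: "vcmp B R (run B (dom2 B R)) =
        vcmp B (run B (cod2 B R)) (hcmp B R (idc B (idm B (bsrc B (dom2 B R)))))"
    by (rule run_nat) (fact R(1))
  have "vcmp B L (run B II) = vcmp B R (run B II)"
    using n1 n2 unfolding L(2,3) R(2,3) II(2) I(4) R_def[symmetric] i_def[symmetric] RL by simp
  then have "L = R"
    by (rule cancel_r[OF iso_run[of II], rotated -1]) (use L R II I in \<open>simp_all add: II_def\<close>)
  then show ?thesis unfolding L_def R_def I_def .
qed
end 


locale fibctx =
  fixes E :: "('o,'a,'c) bicat" and B :: "('p,'q,'r) bicat"
    and P :: "('o,'a,'c,'p,'q,'r) laxf" and cl :: "'a \<Rightarrow> 'r \<Rightarrow> 'c" and b :: 'p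
  assumes fib: "fibered_in_pseudogroupoids E B P"
    and cleav: "local_cleavage E B P cl"
    and bob: "b \<in> ob B"
begin

lemma lax: "lax_functor E B P" using fib unfolding fibered_in_pseudogroupoids_def by blast
lemma bicE: "bicat E" using lax unfolding lax_functor_def by blast
lemma bicB: "bicat B" using lax unfolding lax_functor_def by blast

sublocale E: bic E by (rule bic.intro, rule bicE)
sublocale B: bic B by (rule bic.intro, rule bicB)

lemma F_ob: "x\<in>ob E \<Longrightarrow> fo P x \<in> ob B"
  using lax[unfolded lax_functor_def, THEN conjunct2, THEN conjunct2, THEN conjunct1] by blast
lemma F_ar: "f\<in>ar E \<Longrightarrow> f1 P f \<in> ar B \<and> bsrc B (f1 P f) = fo P (bsrc E f) \<and> btrg B (f1 P f) = fo P (btrg E f)"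
  using lax[unfolded lax_functor_def, THEN conjunct2, THEN conjunct2, THEN conjunct2, THEN conjunct1] by blast
lemma F_ce: "\<alpha>\<in>ce E \<Longrightarrow> f2 P \<alpha> \<in> ce B \<and> dom2 B (f2 P \<alpha>) = f1 P (dom2 E \<alpha>) \<and> cod2 B (f2 P \<alpha>) = f1 P (cod2 E \<alpha>)"
  using lax[unfolded lax_functor_def, THEN conjunct2, THEN conjunct2, THEN conjunct2, THEN conjunct2, THEN conjunct1] by blast
lemma F_idc: "f\<in>ar E \<Longrightarrow> f2 P (idc E f) = idc B (f1 P f)"
  using lax[unfolded lax_functor_def, THEN conjunct2, THEN conjunct2, THEN conjunct2, THEN conjunct2, THEN conjunct2, THEN conjunct1] by blast
lemma F_vcmp: "\<alpha>\<in>ce E \<Longrightarrow> \<beta>\<in>ce E \<Longrightarrow> dom2 E \<beta> = cod2 E \<alpha> \<Longrightarrow> f2 P (vcmp E \<beta> \<alpha>) = vcmp B (f2 P \<beta>) (f2 P \<alpha>)"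
  using lax[unfolded lax_functor_def, THEN conjunct2, THEN conjunct2, THEN conjunct2, THEN conjunct2, THEN conjunct2, THEN conjunct2, THEN conjunct1] by blast
lemma phi_typ: "f\<in>ar E \<Longrightarrow> g\<in>ar E \<Longrightarrow> bsrc E g = btrg E f \<Longrightarrow>
        phi P g f \<in> ce B \<and> dom2 B (phi P g f) = cmp B (f1 P g) (f1 P f) \<and>
        cod2 B (phi P g f) = f1 P (cmp E g f)"
  using lax[unfolded lax_functor_def, THEN conjunct2, THEN conjunct2, THEN conjunct2, THEN conjunct2, THEN conjunct2, THEN conjunct2, THEN conjunct2, THEN conjunct1] by blast
lemma phi_nat: "\<alpha>\<in>ce E \<Longrightarrow> \<beta>\<in>ce E \<Longrightarrow> bsrc E (dom2 E \<beta>) = btrg E (dom2 E \<alpha>) \<Longrightarrow>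
        vcmp B (f2 P (hcmp E \<beta> \<alpha>)) (phi P (dom2 E \<beta>) (dom2 E \<alpha>)) =
        vcmp B (phi P (cod2 E \<beta>) (cod2 E \<alpha>)) (hcmp B (f2 P \<beta>) (f2 P \<alpha>))"
  using lax[unfolded lax_functor_def, THEN conjunct2, THEN conjunct2, THEN conjunct2, THEN conjunct2, THEN conjunct2, THEN conjunct2, THEN conjunct2, THEN conjunct2, THEN conjunct1] by blast
lemma phi0_typ: "x\<in>ob E \<Longrightarrow> phi0 P x \<in> ce B \<and> dom2 B (phi0 P x) = idm B (fo P x) \<and> cod2 B (phi0 P x) = f1 P (idm E x)"
  using lax[unfolded lax_functor_def, THEN conjunct2, THEN conjunct2, THEN conjunct2, THEN conjunct2, THEN conjunct2, THEN conjunct2, THEN conjunct2, THEN conjunct2, THEN conjunct2, THEN conjunct1] by blast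
lemma F_assoc: "f\<in>ar E \<Longrightarrow> g\<in>ar E \<Longrightarrow> h\<in>ar E \<Longrightarrow> bsrc E g = btrg E f \<Longrightarrow> bsrc E h = btrg E g \<Longrightarrow>
        vcmp B (f2 P (asc E h g f))
          (vcmp B (phi P (cmp E h g) f) (hcmp B (phi P h g) (idc B (f1 P f)))) =
        vcmp B (phi P h (cmp E g f))
          (vcmp B (hcmp B (idc B (f1 P h)) (phi P g f)) (asc B (f1 P h) (f1 P g) (f1 P f)))"
  using lax[unfolded lax_functor_def, THEN conjunct2, THEN conjunct2, THEN conjunct2, THEN conjunct2, THEN conjunct2, THEN conjunct2, THEN conjunct2, THEN conjunct2, THEN conjunct2, THEN conjunct2, THEN conjunct1] by blast
lemma F_lun: "f\<in>ar E \<Longrightarrow> vcmp B (f2 P (lun E f))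
          (vcmp B (phi P (idm E (btrg E f)) f) (hcmp B (phi0 P (btrg E f)) (idc B (f1 P f)))) =
        lun B (f1 P f)"
  using lax[unfolded lax_functor_def, THEN conjunct2, THEN conjunct2, THEN conjunct2, THEN conjunct2, THEN conjunct2, THEN conjunct2, THEN conjunct2, THEN conjunct2, THEN conjunct2, THEN conjunct2, THEN conjunct2, THEN conjunct1] by blast
lemma F_run: "f\<in>ar E \<Longrightarrow> vcmp B (f2 P (run E f))
          (vcmp B (phi P f (idm E (bsrc E f))) (hcmp B (idc B (f1 P f)) (phi0 P (bsrc E f)))) =
        run B (f1 P f)"
  using lax[unfolded lax_functor_def, THEN conjunct2, THEN conjunct2, THEN conjunct2, THEN conjunct2, THEN conjunct2, THEN conjunct2, THEN conjunct2, THEN conjunct2, THEN conjunct2, THEN conjunct2, THEN conjunct2, THEN conjunct2] by blast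

lemma T_F[simp]: "x\<in>ob E \<Longrightarrow> fo P x \<in> ob B"
  "f\<in>ar E \<Longrightarrow> f1 P f \<in> ar B" "f\<in>ar E \<Longrightarrow> bsrc B (f1 P f) = fo P (bsrc E f)"
  "f\<in>ar E \<Longrightarrow> btrg B (f1 P f) = fo P (btrg E f)"
  "\<alpha>\<in>ce E \<Longrightarrow> f2 P \<alpha> \<in> ce B" "\<alpha>\<in>ce E \<Longrightarrow> dom2 B (f2 P \<alpha>) = f1 P (dom2 E \<alpha>)"
  "\<alpha>\<in>ce E \<Longrightarrow> cod2 B (f2 P \<alpha>) = f1 P (cod2 E \<alpha>)"
  using F_ob F_ar F_ce by auto
lemma T_phi[simp]: "f\<in>ar E \<Longrightarrow> g\<in>ar E \<Longrightarrow> bsrc E g = btrg E f \<Longrightarrow> phi P g f \<in> ce B"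
  "f\<in>ar E \<Longrightarrow> g\<in>ar E \<Longrightarrow> bsrc E g = btrg E f \<Longrightarrow> dom2 B (phi P g f) = cmp B (f1 P g) (f1 P f)"
  "f\<in>ar E \<Longrightarrow> g\<in>ar E \<Longrightarrow> bsrc E g = btrg E f \<Longrightarrow> cod2 B (phi P g f) = f1 P (cmp E g f)"
  using phi_typ by auto
lemma T_phi0[simp]: "x\<in>ob E \<Longrightarrow> phi0 P x \<in> ce B" "x\<in>ob E \<Longrightarrow> dom2 B (phi0 P x) = idm B (fo P x)"
   "x\<in>ob E \<Longrightarrow> cod2 B (phi0 P x) = f1 P (idm E x)"
  using phi0_typ by auto

end


context fibctx begin

lemma cart: "f \<in> ar E \<Longrightarrow> cartesian E B P f"
  using fib unfolding fibered_in_pseudogroupoids_def by blast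

lemma lfib: "locally_fibered_in_groupoids E B P"
  using fib unfolding fibered_in_pseudogroupoids_def by blast

lemma uniq: "\<theta>\<in>ce E \<Longrightarrow> \<psi>\<in>ce E \<Longrightarrow> \<chi>\<in>ce B \<Longrightarrow>
        cod2 E \<psi> = cod2 E \<theta> \<Longrightarrow>
        dom2 B \<chi> = f1 P (dom2 E \<psi>) \<Longrightarrow> cod2 B \<chi> = f1 P (dom2 E \<theta>) \<Longrightarrow>
        vcmp B (f2 P \<theta>) \<chi> = f2 P \<psi> \<Longrightarrow>
        (\<exists>!\<xi>. \<xi> \<in> ce E \<and> dom2 E \<xi> = dom2 E \<psi> \<and> cod2 E \<xi> = dom2 E \<theta> \<and>
             vcmp E \<theta> \<xi> = \<psi> \<and> f2 P \<xi> = \<chi>)"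
  using lfib unfolding locally_fibered_in_groupoids_def by blast

lemma lift2: "u\<in>ar E \<Longrightarrow> \<kappa>\<in>ce B \<Longrightarrow> cod2 B \<kappa> = f1 P u \<Longrightarrow> (\<exists>\<theta>\<in>ce E. cod2 E \<theta> = u \<and> f2 P \<theta> = \<kappa>)"
  using lfib unfolding locally_fibered_in_groupoids_def by blast

lemma clv: "u\<in>ar E \<Longrightarrow> \<kappa>\<in>ce B \<Longrightarrow> cod2 B \<kappa> = f1 P u \<Longrightarrow>
        cl u \<kappa> \<in> ce E \<and> cod2 E (cl u \<kappa>) = u \<and> f2 P (cl u \<kappa>) = \<kappa>"
  using cleav unfolding local_cleavage_def by blast

lemma f2_iso: assumes "iso2 E \<theta>" shows "iso2 B (f2 P \<theta>)"
proof -
  let ?j = "inv2 E \<theta>"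
  have t: "\<theta> \<in> ce E" using assms by simp
  have a: "vcmp B (f2 P ?j) (f2 P \<theta>) = idc B (dom2 B (f2 P \<theta>))"
    using assms t F_vcmp[of \<theta> ?j] F_idc[of "dom2 E \<theta>"] by simp
  have b: "vcmp B (f2 P \<theta>) (f2 P ?j) = idc B (cod2 B (f2 P \<theta>))"
    using assms t F_vcmp[of ?j \<theta>] F_idc[of "cod2 E \<theta>"] by simp
  have "f2 P ?j \<in> ce B" "dom2 B (f2 P ?j) = cod2 B (f2 P \<theta>)" "cod2 B (f2 P ?j) = dom2 B (f2 P \<theta>)"
    "f2 P \<theta> \<in> ce B" using assms t by simp_all
  then show ?thesis unfolding iso2_def using a b by blast
qed

lemma f2_inv: assumes "iso2 E \<theta>" shows "f2 P (inv2 E \<theta>) = inv2 B (f2 P \<theta>)"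
proof -
  let ?j = "inv2 E \<theta>"
  have t: "\<theta> \<in> ce E" using assms by simp
  have i: "iso2 B (f2 P \<theta>)" by (rule f2_iso[OF assms])
  have a: "vcmp B (f2 P ?j) (f2 P \<theta>) = idc B (dom2 B (f2 P \<theta>))"
    using assms t F_vcmp[of \<theta> ?j] F_idc[of "dom2 E \<theta>"] by simp
  show ?thesis
    by (rule B.inv_unique[of "f2 P \<theta>"]) (use assms t a i in simp_all)
qed

lemma reflect: assumes t: "\<theta> \<in> ce E" and i: "iso2 B (f2 P \<theta>)" shows "iso2 E \<theta>"
proof -
  let ?c = "cod2 E \<theta>" and ?d = "dom2 E \<theta>"
  have "\<exists>!\<xi>. \<xi> \<in> ce E \<and> dom2 E \<xi> = dom2 E (idc E ?c) \<and> cod2 E \<xi> = dom2 E \<theta> \<and>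
             vcmp E \<theta> \<xi> = idc E ?c \<and> f2 P \<xi> = inv2 B (f2 P \<theta>)"
    by (rule uniq) (use t i F_idc[of ?c] in simp_all)
  then obtain \<xi> where x: "\<xi> \<in> ce E" "dom2 E \<xi> = ?c" "cod2 E \<xi> = ?d" "vcmp E \<theta> \<xi> = idc E ?c"
     "f2 P \<xi> = inv2 B (f2 P \<theta>)" using t by auto
  have u: "\<exists>!\<zeta>. \<zeta> \<in> ce E \<and> dom2 E \<zeta> = dom2 E \<theta> \<and> cod2 E \<zeta> = dom2 E \<theta> \<and>
             vcmp E \<theta> \<zeta> = \<theta> \<and> f2 P \<zeta> = idc B (f1 P ?d)"
    by (rule uniq) (use t in simp_all)
  have c1: "vcmp E \<xi> \<theta> \<in> ce E \<and> dom2 E (vcmp E \<xi> \<theta>) = ?d \<and> cod2 E (vcmp E \<xi> \<theta>) = ?d \<and>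
             vcmp E \<theta> (vcmp E \<xi> \<theta>) = \<theta> \<and> f2 P (vcmp E \<xi> \<theta>) = idc B (f1 P ?d)"
  proof -
    have "vcmp E \<theta> (vcmp E \<xi> \<theta>) = vcmp E (vcmp E \<theta> \<xi>) \<theta>"
      by (rule E.vassoc) (use t x in simp_all)
    also have "\<dots> = \<theta>" using x t by simp
    finally have e: "vcmp E \<theta> (vcmp E \<xi> \<theta>) = \<theta>" .
    have "f2 P (vcmp E \<xi> \<theta>) = vcmp B (inv2 B (f2 P \<theta>)) (f2 P \<theta>)"
      using F_vcmp[of \<theta> \<xi>] t x by simp
    also have "\<dots> = idc B (f1 P ?d)" using i t by simp
    finally show ?thesis using e t x by simp
  qed
  have c2: "idc E ?d \<in> ce E \<and> dom2 E (idc E ?d) = ?d \<and> cod2 E (idc E ?d) = ?d \<and>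
             vcmp E \<theta> (idc E ?d) = \<theta> \<and> f2 P (idc E ?d) = idc B (f1 P ?d)"
    using t F_idc[of ?d] by simp
  have "vcmp E \<xi> \<theta> = idc E ?d" using u c1 c2 by blast
  then show ?thesis unfolding iso2_def using t x by blast
qed

abbreviation "I \<equiv> idm B b"

lemma fib2_iso: assumes "\<alpha> \<in> fib_ce E B P b" shows "fib_iso E B P b \<alpha>"
proof -
  have a: "\<alpha> \<in> ce E" "f2 P \<alpha> = idc B I" using assms unfolding fib_ce_def by auto
  have ia: "iso2 E \<alpha>" by (rule reflect) (use a bob B.iso_idc in simp_all)
  have "f2 P (inv2 E \<alpha>) = idc B I" using f2_inv[OF ia] a bob B.inv_idc by simp
  then have "inv2 E \<alpha> \<in> fib_ce E B P b" unfolding fib_ce_def using ia by simp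
  then show ?thesis unfolding fib_iso_def using assms ia by (intro conjI bexI[of _ "inv2 E \<alpha>"]) simp_all
qed

end


context fibctx begin

abbreviation "L \<equiv> lun B (idm B b)"
abbreviation "R \<equiv> run B (idm B b)"

lemma I_facts[simp]: "I \<in> ar B" "bsrc B I = b" "btrg B I = b" using bob by simp_all

lemma L_facts[simp]: "L \<in> ce B" "dom2 B L = cmp B I I" "cod2 B L = I" "iso2 B L"
  using bob B.iso_lun[of I] by simp_all

lemma fibar: assumes "h \<in> fib_ar E B P b"
  shows "h \<in> ar E" "f1 P h = I" "fo P (bsrc E h) = b" "fo P (btrg E h) = b"
proof -
  show h: "h \<in> ar E" "f1 P h = I" using assms unfolding fib_ar_def by auto
  show "fo P (bsrc E h) = b" using T_F(3)[OF h(1)] h(2) by simp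
  show "fo P (btrg E h) = b" using T_F(4)[OF h(1)] h(2) by simp
qed

definition lam0 where "lam0 z = cl (idm E z) (phi0 P z)"

lemma lam0: assumes "z \<in> ob E" "fo P z = b"
  shows "lam0 z \<in> ce E" "cod2 E (lam0 z) = idm E z" "f2 P (lam0 z) = phi0 P z"
    "dom2 E (lam0 z) = fib_id E B P cl z" "fib_id E B P cl z \<in> ar E"
    "f1 P (fib_id E B P cl z) = I" "bsrc E (fib_id E B P cl z) = z" "btrg E (fib_id E B P cl z) = z"
proof -
  have c: "lam0 z \<in> ce E \<and> cod2 E (lam0 z) = idm E z \<and> f2 P (lam0 z) = phi0 P z"
    unfolding lam0_def by (rule clv) (use assms in simp_all)
  then show "lam0 z \<in> ce E" "cod2 E (lam0 z) = idm E z" "f2 P (lam0 z) = phi0 P z" by auto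
  show d: "dom2 E (lam0 z) = fib_id E B P cl z" unfolding lam0_def fib_id_def ..
  show "fib_id E B P cl z \<in> ar E" using c d[symmetric] by simp
  have "dom2 B (f2 P (lam0 z)) = f1 P (dom2 E (lam0 z))" using c by (intro T_F(6)) simp
  then show "f1 P (fib_id E B P cl z) = I" using c d assms by simp
  have "bsrc E (cod2 E (lam0 z)) = bsrc E (dom2 E (lam0 z))" "btrg E (cod2 E (lam0 z)) = btrg E (dom2 E (lam0 z))"
    using c by (intro E.T_ce(3,4), simp)+
  then show "bsrc E (fib_id E B P cl z) = z" "btrg E (fib_id E B P cl z) = z" using c d assms by simp_all
qed

lemma cellV:
  assumes a: "a \<in> fib_ar E B P b" and c: "c \<in> fib_ar E B P b" and ac: "bsrc E a = btrg E c"
    and z: "z = bsrc E c" "btrg E a = z"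
    and psi: "\<psi> \<in> ce E" "dom2 E \<psi> = fib_id E B P cl z" "cod2 E \<psi> = cmp E a c"
    and eq: "vcmp B (f2 P \<psi>) L = phi P a c"
  shows "\<exists>\<alpha>. fib_iso E B P b \<alpha> \<and> dom2 E \<alpha> = fib_cmp E B P cl b a c \<and> cod2 E \<alpha> = fib_id E B P cl z"
proof -
  note fa = fibar[OF a] and fc = fibar[OF c]
  have zo: "z \<in> ob E" "fo P z = b" using z fc by simp_all
  note l0 = lam0[OF zo]
  define \<kappa> where "\<kappa> = vcmp B (phi P a c) (inv2 B L)"
  have k: "\<kappa> \<in> ce B" "dom2 B \<kappa> = I" "cod2 B \<kappa> = f1 P (cmp E a c)"
    unfolding \<kappa>_def using fa fc ac by simp_all
  define \<Lambda> where "\<Lambda> = cl (cmp E a c) \<kappa>"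
  have La: "\<Lambda> \<in> ce E \<and> cod2 E \<Lambda> = cmp E a c \<and> f2 P \<Lambda> = \<kappa>"
    unfolding \<Lambda>_def by (rule clv) (use k fa fc ac in simp_all)
  have dL: "dom2 E \<Lambda> = fib_cmp E B P cl b a c" unfolding \<Lambda>_def \<kappa>_def fib_cmp_def ..
  have f1L: "f1 P (dom2 E \<Lambda>) = I" using La k T_F(6)[of \<Lambda>] by simp
  have fpsi: "f2 P \<psi> = \<kappa>"
  proof -
    have "f2 P \<psi> = vcmp B (f2 P \<psi>) (vcmp B L (inv2 B L))" using psi l0 by simp
    also have "\<dots> = vcmp B (vcmp B (f2 P \<psi>) L) (inv2 B L)"
      by (rule B.vassoc) (use psi l0 fa fc in simp_all)
    also have "\<dots> = \<kappa>" unfolding eq \<kappa>_def ..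
    finally show ?thesis .
  qed
  have "\<exists>!\<xi>. \<xi> \<in> ce E \<and> dom2 E \<xi> = dom2 E \<psi> \<and> cod2 E \<xi> = dom2 E \<Lambda> \<and>
             vcmp E \<Lambda> \<xi> = \<psi> \<and> f2 P \<xi> = idc B I"
    by (rule uniq) (use La psi l0 f1L k fpsi in simp_all)
  then obtain \<xi> where x: "\<xi> \<in> ce E" "dom2 E \<xi> = fib_id E B P cl z" "cod2 E \<xi> = fib_cmp E B P cl b a c"
     "f2 P \<xi> = idc B I" using psi dL by auto
  have "\<xi> \<in> fib_ce E B P b" unfolding fib_ce_def using x by simp
  then have "fib_iso E B P b \<xi>" by (rule fib2_iso)
  then obtain \<beta> where bt: "\<beta> \<in> fib_ce E B P b" "dom2 E \<beta> = cod2 E \<xi>" "cod2 E \<beta> = dom2 E \<xi>"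
    unfolding fib_iso_def by blast
  have "fib_iso E B P b \<beta>" by (rule fib2_iso[OF bt(1)])
  then show ?thesis using bt x by auto
qed

end


context fibctx begin

lemma rightinv:
  assumes a: "a \<in> fib_ar E B P b"
  shows "\<exists>c. c \<in> fib_ar E B P b \<and> bsrc E c = btrg E a \<and> btrg E c = bsrc E a \<and>
     (\<exists>\<gamma>. iso2 E \<gamma> \<and> dom2 E \<gamma> = cmp E a c \<and> cod2 E \<gamma> = fib_id E B P cl (btrg E a) \<and>
          vcmp B (f2 P \<gamma>) (phi P a c) = L)"
proof -
  note fa = fibar[OF a]
  define y where "y = btrg E a"
  have yo: "y \<in> ob E" "fo P y = b" using fa by (simp_all add: y_def)
  note l0 = lam0[OF yo]
  define V where "V = fib_id E B P cl y"
  have V: "V \<in> ar E" "f1 P V = I" "bsrc E V = y" "btrg E V = y" using l0 by (simp_all add: V_def)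
  have ci: "\<forall>g\<in>ar E. \<forall>h\<in>ar B. \<forall>\<alpha>.
        btrg E g = btrg E a \<longrightarrow>
        bsrc B h = fo P (bsrc E g) \<longrightarrow> btrg B h = fo P (bsrc E a) \<longrightarrow>
        iso2 B \<alpha> \<longrightarrow> dom2 B \<alpha> = cmp B (f1 P a) h \<longrightarrow> cod2 B \<alpha> = f1 P g \<longrightarrow>
        (\<exists>ht at bt. is_lift E B P a g h \<alpha> ht at bt)"
    using cart[OF fa(1)] unfolding cartesian_def by blast
  have "\<exists>ht at bt. is_lift E B P a V I L ht at bt"
    using ci[rule_format, of V I L] V fa yo y_def by simp
  then obtain ht at bt where lf: "is_lift E B P a V I L ht at bt" by blast
  have ht: "ht \<in> ar E" "bsrc E ht = y" "btrg E ht = bsrc E a"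
    and at: "iso2 E at" "dom2 E at = cmp E a ht" "cod2 E at = V"
    and bt: "iso2 B bt" "dom2 B bt = f1 P ht" "cod2 B bt = I"
    and leq: "vcmp B L (hcmp B (idc B I) bt) = vcmp B (f2 P at) (phi P a ht)"
    using lf V fa unfolding is_lift_def by auto
  have "\<exists>\<theta>\<in>ce E. cod2 E \<theta> = ht \<and> f2 P \<theta> = inv2 B bt"
    by (rule lift2) (use ht bt in simp_all)
  then obtain \<theta> where th: "\<theta> \<in> ce E" "cod2 E \<theta> = ht" "f2 P \<theta> = inv2 B bt" by blast
  define c where "c = dom2 E \<theta>"
  have "dom2 B (f2 P \<theta>) = f1 P (dom2 E \<theta>)" using th by (intro T_F(6))
  then have f1c: "f1 P c = I" using th bt by (simp add: c_def)
  have c: "c \<in> ar E" "bsrc E c = y" "btrg E c = bsrc E a"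
  proof -
    show "c \<in> ar E" using th by (simp add: c_def)
    have "bsrc E (cod2 E \<theta>) = bsrc E (dom2 E \<theta>)" "btrg E (cod2 E \<theta>) = btrg E (dom2 E \<theta>)"
      using th by (intro E.T_ce(3,4), simp)+
    then show "bsrc E c = y" "btrg E c = bsrc E a" using th ht by (simp_all add: c_def)
  qed
  have thi: "iso2 E \<theta>" by (rule reflect) (use th bt B.iso_inv in simp_all)
  define \<gamma> where "\<gamma> = vcmp E at (hcmp E (idc E a) \<theta>)"
  have H: "hcmp E (idc E a) \<theta> \<in> ce E" "dom2 E (hcmp E (idc E a) \<theta>) = cmp E a c"
     "cod2 E (hcmp E (idc E a) \<theta>) = cmp E a ht"
    using th fa c ht by (simp_all add: c_def)
  have gi: "iso2 E \<gamma>" unfolding \<gamma>_def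
    by (rule E.iso_vcmp[OF _ at(1)]) (use H at fa thi th ht c E.iso_hcmp E.iso_idc in \<open>simp_all add: c_def\<close>)
  have gd: "dom2 E \<gamma> = cmp E a c" "cod2 E \<gamma> = V" unfolding \<gamma>_def using H at by simp_all
  have pn: "vcmp B (f2 P (hcmp E (idc E a) \<theta>)) (phi P (dom2 E (idc E a)) (dom2 E \<theta>)) =
        vcmp B (phi P (cod2 E (idc E a)) (cod2 E \<theta>)) (hcmp B (f2 P (idc E a)) (f2 P \<theta>))"
    by (rule phi_nat) (use th fa ht c in \<open>simp_all add: c_def\<close>)
  have pn': "vcmp B (f2 P (hcmp E (idc E a) \<theta>)) (phi P a c) =
        vcmp B (phi P a ht) (hcmp B (idc B I) (inv2 B bt))"
    using pn th fa F_idc[of a] by (simp add: c_def)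
  have f2g: "f2 P \<gamma> = vcmp B (f2 P at) (f2 P (hcmp E (idc E a) \<theta>))"
    unfolding \<gamma>_def by (rule F_vcmp) (use H at in simp_all)
  have "vcmp B (f2 P \<gamma>) (phi P a c) = vcmp B (f2 P at) (vcmp B (f2 P (hcmp E (idc E a) \<theta>)) (phi P a c))"
    unfolding f2g by (rule B.vassoc') (use H at fa c f1c in simp_all)
  also have "\<dots> = vcmp B (f2 P at) (vcmp B (phi P a ht) (hcmp B (idc B I) (inv2 B bt)))"
    unfolding pn' ..
  also have "\<dots> = vcmp B (vcmp B (f2 P at) (phi P a ht)) (hcmp B (idc B I) (inv2 B bt))"
    by (rule B.vassoc) (use at fa ht bt in simp_all)
  also have "\<dots> = vcmp B (vcmp B L (hcmp B (idc B I) bt)) (hcmp B (idc B I) (inv2 B bt))"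
    unfolding leq ..
  also have "\<dots> = vcmp B L (vcmp B (hcmp B (idc B I) bt) (hcmp B (idc B I) (inv2 B bt)))"
    by (rule B.vassoc') (use bt fa ht in simp_all)
  also have "\<dots> = vcmp B L (hcmp B (idc B I) (vcmp B bt (inv2 B bt)))"
    by (subst B.wl) (use bt fa ht in simp_all)
  also have "\<dots> = vcmp B L (hcmp B (idc B I) (idc B I))" using bt by simp
  also have "\<dots> = L" using B.hcmp_idc[of I I] by simp
  finally have eqL: "vcmp B (f2 P \<gamma>) (phi P a c) = L" .
  have "c \<in> fib_ar E B P b" unfolding fib_ar_def using c f1c by simp
  moreover have "bsrc E c = btrg E a" using c y_def by simp
  moreover have "cod2 E \<gamma> = fib_id E B P cl (btrg E a)" using gd V_def y_def by simp
  ultimately show ?thesis using c(3) gi gd(1) eqL by blast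
qed

end


context fibctx begin

lemma dance:
  assumes h: "h \<in> fib_ar E B P b" and g: "g \<in> fib_ar E B P b" and k: "k \<in> fib_ar E B P b"
    and hx: "bsrc E h = x" "btrg E h = y" and gx: "bsrc E g = y" "btrg E g = x"
    and kx: "bsrc E k = x" "btrg E k = y"
    and ga: "iso2 E \<gamma>" "dom2 E \<gamma> = cmp E h g" "cod2 E \<gamma> = fib_id E B P cl y"
       "vcmp B (f2 P \<gamma>) (phi P h g) = L"
    and gb: "iso2 E \<gamma>'" "dom2 E \<gamma>' = cmp E g k" "cod2 E \<gamma>' = fib_id E B P cl x"
       "vcmp B (f2 P \<gamma>') (phi P g k) = L"
  shows "\<exists>\<psi>. \<psi> \<in> ce E \<and> dom2 E \<psi> = fib_id E B P cl x \<and> cod2 E \<psi> = cmp E g h \<and>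
            vcmp B (f2 P \<psi>) L = phi P g h"
proof -
  note fh = fibar[OF h] and fg = fibar[OF g] and fk = fibar[OF k]
  have xo: "x \<in> ob E" "fo P x = b" using fh hx by auto
  have yo: "y \<in> ob E" "fo P y = b" using fh hx by auto
  note lx = lam0[OF xo] and ly = lam0[OF yo]
  define Vx where "Vx = fib_id E B P cl x"
  define Vy where "Vy = fib_id E B P cl y"
  define lx' where "lx' = lam0 x"
  define ly' where "ly' = lam0 y"
  have Vx: "Vx \<in> ar E" "f1 P Vx = I" "bsrc E Vx = x" "btrg E Vx = x" using lx by (simp_all add: Vx_def)
  have Vy: "Vy \<in> ar E" "f1 P Vy = I" "bsrc E Vy = y" "btrg E Vy = y" using ly by (simp_all add: Vy_def)
  have lxf: "lx' \<in> ce E" "dom2 E lx' = Vx" "cod2 E lx' = idm E x" "f2 P lx' = phi0 P x"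
    using lx by (simp_all add: lx'_def Vx_def)
  have lyf: "ly' \<in> ce E" "dom2 E ly' = Vy" "cod2 E ly' = idm E y" "f2 P ly' = phi0 P y"
    using ly by (simp_all add: ly'_def Vy_def)
  have ar: "h \<in> ar E" "g \<in> ar E" "k \<in> ar E" "f1 P h = I" "f1 P g = I" "f1 P k = I"
    using fh fg fk by simp_all
  have gat: "\<gamma> \<in> ce E" "dom2 E \<gamma> = cmp E h g" "cod2 E \<gamma> = Vy" using ga by (simp_all add: Vy_def)
  have gbt: "\<gamma>' \<in> ce E" "dom2 E \<gamma>' = cmp E g k" "cod2 E \<gamma>' = Vx" using gb by (simp_all add: Vx_def)
  note ty = ar hx gx kx Vx Vy lxf lyf gat gbt xo yo
  define i where "i = idc B I"
  have i: "i \<in> ce B" "dom2 B i = I" "cod2 B i = I" by (simp_all add: i_def)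
  define Hk where "Hk = hcmp E \<gamma> (idc E k)"
  define Lk where "Lk = hcmp E ly' (idc E k)"
  define acell where "acell = vcmp E (lun E k) (vcmp E Lk Hk)"
  define Ag where "Ag = asc E h g k"
  define Gh where "Gh = hcmp E (idc E h) \<gamma>'"
  define Mh where "Mh = hcmp E (idc E h) lx'"
  define ccell where "ccell = vcmp E (run E h) (vcmp E Mh (vcmp E Gh Ag))"
  define p1 where "p1 = phi P (cmp E h g) k"
  define p2 where "p2 = hcmp B (phi P h g) i"
  define \<Phi> where "\<Phi> = vcmp B p1 p2"
  define M where "M = vcmp B L (hcmp B L i)"
  have Hk: "Hk \<in> ce E" "dom2 E Hk = cmp E (cmp E h g) k" "cod2 E Hk = cmp E Vy k"
    unfolding Hk_def using ty by simp_all
  have Lk: "Lk \<in> ce E" "dom2 E Lk = cmp E Vy k" "cod2 E Lk = cmp E (idm E y) k"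
    unfolding Lk_def using ty by simp_all
  have ac: "acell \<in> ce E" "dom2 E acell = cmp E (cmp E h g) k" "cod2 E acell = k"
    unfolding acell_def using ty Hk Lk by simp_all
  have Ag: "Ag \<in> ce E" "dom2 E Ag = cmp E (cmp E h g) k" "cod2 E Ag = cmp E h (cmp E g k)"
    unfolding Ag_def using ty by simp_all
  have Gh: "Gh \<in> ce E" "dom2 E Gh = cmp E h (cmp E g k)" "cod2 E Gh = cmp E h Vx"
    unfolding Gh_def using ty by simp_all
  have Mh: "Mh \<in> ce E" "dom2 E Mh = cmp E h Vx" "cod2 E Mh = cmp E h (idm E x)"
    unfolding Mh_def using ty by simp_all
  have cc: "ccell \<in> ce E" "dom2 E ccell = cmp E (cmp E h g) k" "cod2 E ccell = h"
    unfolding ccell_def using ty Ag Gh Mh by simp_all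
  have p1: "p1 \<in> ce B" "dom2 B p1 = cmp B (f1 P (cmp E h g)) I" "cod2 B p1 = f1 P (cmp E (cmp E h g) k)"
    unfolding p1_def using ty by simp_all
  have p2: "p2 \<in> ce B" "dom2 B p2 = cmp B (cmp B I I) I" "cod2 B p2 = cmp B (f1 P (cmp E h g)) I"
    unfolding p2_def using ty i by simp_all
  have Phi: "\<Phi> \<in> ce B" "dom2 B \<Phi> = cmp B (cmp B I I) I" "cod2 B \<Phi> = f1 P (cmp E (cmp E h g) k)"
    unfolding \<Phi>_def using p1 p2 by simp_all
  have M: "M \<in> ce B" "dom2 B M = cmp B (cmp B I I) I" "cod2 B M = I"
    unfolding M_def using i by simp_all
  have Mi: "iso2 B M" unfolding M_def i_def
    by (rule B.iso_vcmp) (use B.iso_hcmp B.iso_idc in simp_all)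
  note tyB = ty i Hk Lk ac Ag Gh Mh cc p1 p2 Phi M
  have f2Hk: "f2 P Hk \<in> ce B" "dom2 B (f2 P Hk) = f1 P (cmp E (cmp E h g) k)" "cod2 B (f2 P Hk) = f1 P (cmp E Vy k)"
    using Hk by simp_all
  have f2Lk: "f2 P Lk \<in> ce B" "dom2 B (f2 P Lk) = f1 P (cmp E Vy k)" "cod2 B (f2 P Lk) = f1 P (cmp E (idm E y) k)"
    using Lk by simp_all
  have f2lk: "f2 P (lun E k) \<in> ce B" "dom2 B (f2 P (lun E k)) = f1 P (cmp E (idm E y) k)" "cod2 B (f2 P (lun E k)) = I"
    using ty by simp_all
  have f2Ag: "f2 P Ag \<in> ce B" "dom2 B (f2 P Ag) = f1 P (cmp E (cmp E h g) k)" "cod2 B (f2 P Ag) = f1 P (cmp E h (cmp E g k))"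
    using Ag by simp_all
  have f2Gh: "f2 P Gh \<in> ce B" "dom2 B (f2 P Gh) = f1 P (cmp E h (cmp E g k))" "cod2 B (f2 P Gh) = f1 P (cmp E h Vx)"
    using Gh by simp_all
  have f2Mh: "f2 P Mh \<in> ce B" "dom2 B (f2 P Mh) = f1 P (cmp E h Vx)" "cod2 B (f2 P Mh) = f1 P (cmp E h (idm E x))"
    using Mh by simp_all
  have f2rh: "f2 P (run E h) \<in> ce B" "dom2 B (f2 P (run E h)) = f1 P (cmp E h (idm E x))" "cod2 B (f2 P (run E h)) = I"
    using ty by simp_all
  note tyF = f2Hk f2Lk f2lk f2Ag f2Gh f2Mh f2rh
  have raw1: "vcmp B (f2 P (hcmp E \<gamma> (idc E k))) (phi P (dom2 E \<gamma>) (dom2 E (idc E k))) =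
        vcmp B (phi P (cod2 E \<gamma>) (cod2 E (idc E k))) (hcmp B (f2 P \<gamma>) (f2 P (idc E k)))"
    by (rule phi_nat) (use ty in simp_all)
  have nat1: "vcmp B (f2 P Hk) p1 = vcmp B (phi P Vy k) (hcmp B (f2 P \<gamma>) i)"
    using raw1 ty by (simp add: Hk_def p1_def i_def F_idc)
  have raw2: "vcmp B (f2 P (hcmp E ly' (idc E k))) (phi P (dom2 E ly') (dom2 E (idc E k))) =
        vcmp B (phi P (cod2 E ly') (cod2 E (idc E k))) (hcmp B (f2 P ly') (f2 P (idc E k)))"
    by (rule phi_nat) (use ty in simp_all)
  have nat2: "vcmp B (f2 P Lk) (phi P Vy k) = vcmp B (phi P (idm E y) k) (hcmp B (phi0 P y) i)"
    using raw2 ty by (simp add: Lk_def i_def F_idc)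
  have rawl: "vcmp B (f2 P (lun E k))
          (vcmp B (phi P (idm E (btrg E k)) k) (hcmp B (phi0 P (btrg E k)) (idc B (f1 P k)))) =
        lun B (f1 P k)"
    by (rule F_lun) (use ty in simp_all)
  have Flun: "vcmp B (f2 P (lun E k)) (vcmp B (phi P (idm E y) k) (hcmp B (phi0 P y) i)) = L"
    using rawl ty by (simp add: i_def)
  define Q where "Q = vcmp B (phi P (idm E y) k) (hcmp B (phi0 P y) i)"
  have Q: "Q \<in> ce B" "dom2 B Q = cmp B I I" "cod2 B Q = f1 P (cmp E (idm E y) k)"
    unfolding Q_def using ty i by simp_all
  have A1: "vcmp B (f2 P Hk) \<Phi> = vcmp B (phi P Vy k) (hcmp B L i)"
  proof -
    have "vcmp B (f2 P Hk) \<Phi> = vcmp B (vcmp B (f2 P Hk) p1) p2" unfolding \<Phi>_def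
      by (rule B.vassoc) (use tyB tyF in simp_all)
    also have "\<dots> = vcmp B (vcmp B (phi P Vy k) (hcmp B (f2 P \<gamma>) i)) p2" unfolding nat1 ..
    also have "\<dots> = vcmp B (phi P Vy k) (vcmp B (hcmp B (f2 P \<gamma>) i) p2)"
      by (rule B.vassoc') (use tyB in simp_all)
    also have "\<dots> = vcmp B (phi P Vy k) (hcmp B (vcmp B (f2 P \<gamma>) (phi P h g)) i)"
      unfolding p2_def i_def by (subst B.wr) (use tyB in simp_all)
    also have "\<dots> = vcmp B (phi P Vy k) (hcmp B L i)" unfolding ga(4) ..
    finally show ?thesis .
  qed
  have A2: "vcmp B (f2 P Lk) (vcmp B (f2 P Hk) \<Phi>) = vcmp B Q (hcmp B L i)"
  proof -
    have "vcmp B (f2 P Lk) (vcmp B (f2 P Hk) \<Phi>) = vcmp B (f2 P Lk) (vcmp B (phi P Vy k) (hcmp B L i))"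
      unfolding A1 ..
    also have "\<dots> = vcmp B (vcmp B (f2 P Lk) (phi P Vy k)) (hcmp B L i)"
      by (rule B.vassoc) (use tyB tyF in simp_all)
    also have "\<dots> = vcmp B Q (hcmp B L i)" unfolding nat2 Q_def ..
    finally show ?thesis .
  qed
  have f2ac: "f2 P acell = vcmp B (f2 P (lun E k)) (vcmp B (f2 P Lk) (f2 P Hk))"
    unfolding acell_def using tyB by (simp add: F_vcmp)
  have claimA: "vcmp B (f2 P acell) \<Phi> = M"
  proof -
    have "vcmp B (f2 P acell) \<Phi> = vcmp B (f2 P (lun E k)) (vcmp B (vcmp B (f2 P Lk) (f2 P Hk)) \<Phi>)"
      unfolding f2ac by (rule B.vassoc') (use tyB tyF in simp_all)
    also have "\<dots> = vcmp B (f2 P (lun E k)) (vcmp B (f2 P Lk) (vcmp B (f2 P Hk) \<Phi>))"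
      by (subst B.vassoc') (use tyB tyF in simp_all)
    also have "\<dots> = vcmp B (f2 P (lun E k)) (vcmp B Q (hcmp B L i))" unfolding A2 ..
    also have "\<dots> = vcmp B (vcmp B (f2 P (lun E k)) Q) (hcmp B L i)"
      by (rule B.vassoc) (use tyB tyF Q in simp_all)
    also have "\<dots> = M" unfolding Q_def Flun M_def ..
    finally show ?thesis .
  qed
  have rawa: "vcmp B (f2 P (asc E h g k))
          (vcmp B (phi P (cmp E h g) k) (hcmp B (phi P h g) (idc B (f1 P k)))) =
        vcmp B (phi P h (cmp E g k))
          (vcmp B (hcmp B (idc B (f1 P h)) (phi P g k)) (asc B (f1 P h) (f1 P g) (f1 P k)))"
    by (rule F_assoc) (use ty in simp_all)
  define aB where "aB = asc B I I I"
  have aB: "aB \<in> ce B" "dom2 B aB = cmp B (cmp B I I) I" "cod2 B aB = cmp B I (cmp B I I)"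
    unfolding aB_def by simp_all
  have C1: "vcmp B (f2 P Ag) \<Phi> = vcmp B (phi P h (cmp E g k)) (vcmp B (hcmp B i (phi P g k)) aB)"
    using rawa ty unfolding Ag_def \<Phi>_def p1_def p2_def i_def aB_def by simp
  have raw3: "vcmp B (f2 P (hcmp E (idc E h) \<gamma>')) (phi P (dom2 E (idc E h)) (dom2 E \<gamma>')) =
        vcmp B (phi P (cod2 E (idc E h)) (cod2 E \<gamma>')) (hcmp B (f2 P (idc E h)) (f2 P \<gamma>'))"
    by (rule phi_nat) (use ty in simp_all)
  have nat3: "vcmp B (f2 P Gh) (phi P h (cmp E g k)) = vcmp B (phi P h Vx) (hcmp B i (f2 P \<gamma>'))"
    using raw3 ty by (simp add: Gh_def i_def F_idc)
  have raw4: "vcmp B (f2 P (hcmp E (idc E h) lx')) (phi P (dom2 E (idc E h)) (dom2 E lx')) =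
        vcmp B (phi P (cod2 E (idc E h)) (cod2 E lx')) (hcmp B (f2 P (idc E h)) (f2 P lx'))"
    by (rule phi_nat) (use ty in simp_all)
  have nat4: "vcmp B (f2 P Mh) (phi P h Vx) = vcmp B (phi P h (idm E x)) (hcmp B i (phi0 P x))"
    using raw4 ty by (simp add: Mh_def i_def F_idc)
  have rawr: "vcmp B (f2 P (run E h))
          (vcmp B (phi P h (idm E (bsrc E h))) (hcmp B (idc B (f1 P h)) (phi0 P (bsrc E h)))) =
        run B (f1 P h)"
    by (rule F_run) (use ty in simp_all)
  have Frun: "vcmp B (f2 P (run E h)) (vcmp B (phi P h (idm E x)) (hcmp B i (phi0 P x))) = R"
    using rawr ty by (simp add: i_def)
  have trB: "vcmp B (hcmp B (idc B I) L) (asc B I (idm B (btrg B I)) I) = hcmp B R (idc B I)"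
    by (rule B.triangle) simp_all
  have tri: "vcmp B (hcmp B i L) aB = hcmp B R i" using trB unfolding i_def aB_def by simp
  define Q' where "Q' = vcmp B (phi P h (idm E x)) (hcmp B i (phi0 P x))"
  have Q': "Q' \<in> ce B" "dom2 B Q' = cmp B I I" "cod2 B Q' = f1 P (cmp E h (idm E x))"
    unfolding Q'_def using ty i by simp_all
  have C2: "vcmp B (f2 P Gh) (vcmp B (f2 P Ag) \<Phi>) = vcmp B (phi P h Vx) (hcmp B R i)"
  proof -
    have "vcmp B (f2 P Gh) (vcmp B (f2 P Ag) \<Phi>) =
        vcmp B (f2 P Gh) (vcmp B (phi P h (cmp E g k)) (vcmp B (hcmp B i (phi P g k)) aB))"
      unfolding C1 ..
    also have "\<dots> = vcmp B (vcmp B (f2 P Gh) (phi P h (cmp E g k))) (vcmp B (hcmp B i (phi P g k)) aB)"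
      by (rule B.vassoc) (use tyB tyF aB in simp_all)
    also have "\<dots> = vcmp B (vcmp B (phi P h Vx) (hcmp B i (f2 P \<gamma>'))) (vcmp B (hcmp B i (phi P g k)) aB)"
      unfolding nat3 ..
    also have "\<dots> = vcmp B (phi P h Vx) (vcmp B (hcmp B i (f2 P \<gamma>')) (vcmp B (hcmp B i (phi P g k)) aB))"
      by (rule B.vassoc') (use tyB tyF aB in simp_all)
    also have "\<dots> = vcmp B (phi P h Vx) (vcmp B (vcmp B (hcmp B i (f2 P \<gamma>')) (hcmp B i (phi P g k))) aB)"
      by (subst B.vassoc) (use tyB tyF aB in simp_all)
    also have "\<dots> = vcmp B (phi P h Vx) (vcmp B (hcmp B i (vcmp B (f2 P \<gamma>') (phi P g k))) aB)"
      unfolding i_def by (subst B.wl) (use tyB tyF aB in simp_all)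
    also have "\<dots> = vcmp B (phi P h Vx) (hcmp B R i)" unfolding gb(4) tri ..
    finally show ?thesis .
  qed
  have C3: "vcmp B (f2 P Mh) (vcmp B (f2 P Gh) (vcmp B (f2 P Ag) \<Phi>)) = vcmp B Q' (hcmp B R i)"
  proof -
    have "vcmp B (f2 P Mh) (vcmp B (f2 P Gh) (vcmp B (f2 P Ag) \<Phi>)) = vcmp B (f2 P Mh) (vcmp B (phi P h Vx) (hcmp B R i))"
      unfolding C2 ..
    also have "\<dots> = vcmp B (vcmp B (f2 P Mh) (phi P h Vx)) (hcmp B R i)"
      by (rule B.vassoc) (use tyB tyF in simp_all)
    also have "\<dots> = vcmp B Q' (hcmp B R i)" unfolding nat4 Q'_def ..
    finally show ?thesis .
  qed
  have f2cc: "f2 P ccell = vcmp B (f2 P (run E h)) (vcmp B (f2 P Mh) (vcmp B (f2 P Gh) (f2 P Ag)))"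
    unfolding ccell_def using tyB by (simp add: F_vcmp)
  have LR: "L = R" using B.lun_eq_run[OF bob] .
  have claimC: "vcmp B (f2 P ccell) \<Phi> = M"
  proof -
    have "vcmp B (f2 P ccell) \<Phi> = vcmp B (f2 P (run E h)) (vcmp B (vcmp B (f2 P Mh) (vcmp B (f2 P Gh) (f2 P Ag))) \<Phi>)"
      unfolding f2cc by (rule B.vassoc') (use tyB tyF in simp_all)
    also have "\<dots> = vcmp B (f2 P (run E h)) (vcmp B (f2 P Mh) (vcmp B (vcmp B (f2 P Gh) (f2 P Ag)) \<Phi>))"
      by (subst B.vassoc') (use tyB tyF in simp_all)
    also have "\<dots> = vcmp B (f2 P (run E h)) (vcmp B (f2 P Mh) (vcmp B (f2 P Gh) (vcmp B (f2 P Ag) \<Phi>)))"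
      by (subst B.vassoc') (use tyB tyF in simp_all)
    also have "\<dots> = vcmp B (f2 P (run E h)) (vcmp B Q' (hcmp B R i))" unfolding C3 ..
    also have "\<dots> = vcmp B (vcmp B (f2 P (run E h)) Q') (hcmp B R i)"
      by (rule B.vassoc) (use tyB tyF Q' in simp_all)
    also have "\<dots> = M" unfolding Q'_def Frun M_def LR ..
    finally show ?thesis .
  qed
  define \<chi> where "\<chi> = vcmp B \<Phi> (inv2 B M)"
  have chi: "\<chi> \<in> ce B" "dom2 B \<chi> = I" "cod2 B \<chi> = f1 P (cmp E (cmp E h g) k)"
    unfolding \<chi>_def using Phi M Mi by simp_all
  have aux: "\<And>X. X \<in> ce B \<Longrightarrow> dom2 B X = f1 P (cmp E (cmp E h g) k) \<Longrightarrow> vcmp B X \<Phi> = M \<Longrightarrow>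
      vcmp B X \<chi> = idc B I"
  proof -
    fix X assume X: "X \<in> ce B" "dom2 B X = f1 P (cmp E (cmp E h g) k)" "vcmp B X \<Phi> = M"
    have "vcmp B X \<chi> = vcmp B (vcmp B X \<Phi>) (inv2 B M)" unfolding \<chi>_def
      by (rule B.vassoc) (use X Phi M Mi in simp_all)
    also have "\<dots> = idc B I" using X M Mi by simp
    finally show "vcmp B X \<chi> = idc B I" .
  qed
  have "\<exists>!\<xi>. \<xi> \<in> ce E \<and> dom2 E \<xi> = dom2 E (idc E k) \<and> cod2 E \<xi> = dom2 E acell \<and>
             vcmp E acell \<xi> = idc E k \<and> f2 P \<xi> = \<chi>"
    by (rule uniq) (use ac chi ty aux[of "f2 P acell"] claimA F_idc[of k] in simp_all)
  then obtain \<xi> where xi: "\<xi> \<in> ce E" "dom2 E \<xi> = k" "cod2 E \<xi> = cmp E (cmp E h g) k" "f2 P \<xi> = \<chi>"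
    using ac ty by auto
  define \<epsilon> where "\<epsilon> = vcmp E ccell \<xi>"
  have eps: "\<epsilon> \<in> ce E" "dom2 E \<epsilon> = k" "cod2 E \<epsilon> = h" unfolding \<epsilon>_def using xi cc by simp_all
  have feps: "f2 P \<epsilon> = idc B I"
  proof -
    have "f2 P \<epsilon> = vcmp B (f2 P ccell) \<chi>" unfolding \<epsilon>_def using xi cc by (simp add: F_vcmp)
    also have "\<dots> = idc B I" by (rule aux) (use cc claimC in simp_all)
    finally show ?thesis .
  qed
  define \<psi> where "\<psi> = vcmp E (hcmp E (idc E g) \<epsilon>) (inv2 E \<gamma>')"
  have psi: "\<psi> \<in> ce E" "dom2 E \<psi> = Vx" "cod2 E \<psi> = cmp E g h"
    unfolding \<psi>_def using eps gb gbt ty by simp_all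
  have raw5: "vcmp B (f2 P (hcmp E (idc E g) \<epsilon>)) (phi P (dom2 E (idc E g)) (dom2 E \<epsilon>)) =
        vcmp B (phi P (cod2 E (idc E g)) (cod2 E \<epsilon>)) (hcmp B (f2 P (idc E g)) (f2 P \<epsilon>))"
    by (rule phi_nat) (use ty eps in simp_all)
  have nat5: "vcmp B (f2 P (hcmp E (idc E g) \<epsilon>)) (phi P g k) = phi P g h"
    using raw5 ty eps feps B.hcmp_idc[of I I] by (simp add: F_idc)
  have ig: "iso2 B (f2 P \<gamma>')" by (rule f2_iso[OF gb(1)])
  have il: "vcmp B (inv2 B (f2 P \<gamma>')) L = phi P g k"
  proof -
    have "vcmp B (inv2 B (f2 P \<gamma>')) L = vcmp B (inv2 B (f2 P \<gamma>')) (vcmp B (f2 P \<gamma>') (phi P g k))"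
      unfolding gb(4) ..
    also have "\<dots> = vcmp B (vcmp B (inv2 B (f2 P \<gamma>')) (f2 P \<gamma>')) (phi P g k)"
      by (rule B.vassoc) (use ig gbt ty in simp_all)
    also have "\<dots> = phi P g k" using ig gbt ty by simp
    finally show ?thesis .
  qed
  have "vcmp B (f2 P \<psi>) L = vcmp B (vcmp B (f2 P (hcmp E (idc E g) \<epsilon>)) (inv2 B (f2 P \<gamma>'))) L"
    unfolding \<psi>_def using eps gb gbt ty f2_inv[OF gb(1)] by (simp add: F_vcmp)
  also have "\<dots> = vcmp B (f2 P (hcmp E (idc E g) \<epsilon>)) (vcmp B (inv2 B (f2 P \<gamma>')) L)"
    by (rule B.vassoc') (use eps ig gbt ty in simp_all)
  also have "\<dots> = phi P g h" unfolding il nat5 ..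
  finally have "vcmp B (f2 P \<psi>) L = phi P g h" .
  then show ?thesis using psi Vx_def by blast
qed

end



context fibctx begin
lemma inv_eq: assumes "iso2 E \<gamma>" "vcmp B (f2 P \<gamma>) \<phi> = L" "\<phi> \<in> ce B" "cod2 B \<phi> = dom2 B (f2 P \<gamma>)"
  shows "vcmp B (f2 P (inv2 E \<gamma>)) L = \<phi>"
proof -
  have ig: "iso2 B (f2 P \<gamma>)" by (rule f2_iso[OF assms(1)])
  have "vcmp B (f2 P (inv2 E \<gamma>)) L = vcmp B (inv2 B (f2 P \<gamma>)) (vcmp B (f2 P \<gamma>) \<phi>)"
    unfolding assms(2) f2_inv[OF assms(1)] ..
  also have "\<dots> = vcmp B (vcmp B (inv2 B (f2 P \<gamma>)) (f2 P \<gamma>)) \<phi>"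
    by (rule B.vassoc) (use ig assms in simp_all)
  also have "\<dots> = \<phi>" using ig assms by simp
  finally show ?thesis .
qed

lemma main: "fiber_is_pseudogroupoid E B P cl b"
  unfolding fiber_is_pseudogroupoid_def
proof (rule conjI)
  show "\<forall>\<alpha>\<in>fib_ce E B P b. fib_iso E B P b \<alpha>" using fib2_iso by blast
  show "\<forall>h\<in>fib_ar E B P b. \<exists>g\<in>fib_ar E B P b.
        bsrc E g = btrg E h \<and> btrg E g = bsrc E h \<and>
        (\<exists>\<alpha>. fib_iso E B P b \<alpha> \<and> dom2 E \<alpha> = fib_cmp E B P cl b g h \<and> cod2 E \<alpha> = fib_id E B P cl (bsrc E h)) \<and>
        (\<exists>\<alpha>. fib_iso E B P b \<alpha> \<and> dom2 E \<alpha> = fib_cmp E B P cl b h g \<and> cod2 E \<alpha> = fib_id E B P cl (btrg E h))"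
  proof
    fix h assume h: "h \<in> fib_ar E B P b"
    obtain g \<gamma> where g: "g \<in> fib_ar E B P b" "bsrc E g = btrg E h" "btrg E g = bsrc E h"
      and ga: "iso2 E \<gamma>" "dom2 E \<gamma> = cmp E h g" "cod2 E \<gamma> = fib_id E B P cl (btrg E h)"
       "vcmp B (f2 P \<gamma>) (phi P h g) = L"
      using rightinv[OF h] by blast
    obtain k \<gamma>' where k: "k \<in> fib_ar E B P b" "bsrc E k = btrg E g" "btrg E k = bsrc E g"
      and gb: "iso2 E \<gamma>'" "dom2 E \<gamma>' = cmp E g k" "cod2 E \<gamma>' = fib_id E B P cl (btrg E g)"
       "vcmp B (f2 P \<gamma>') (phi P g k) = L"
      using rightinv[OF g(1)] by blast
    obtain \<psi> where psi: "\<psi> \<in> ce E" "dom2 E \<psi> = fib_id E B P cl (bsrc E h)" "cod2 E \<psi> = cmp E g h"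
        "vcmp B (f2 P \<psi>) L = phi P g h"
      using dance[OF h g(1) k(1) refl refl g(2,3) k(2)[unfolded g(3)] k(3)[unfolded g(2)] ga
          gb(1,2) gb(3)[unfolded g(3)] gb(4)] by blast
    have s1: "\<exists>\<alpha>. fib_iso E B P b \<alpha> \<and> dom2 E \<alpha> = fib_cmp E B P cl b g h \<and> cod2 E \<alpha> = fib_id E B P cl (bsrc E h)"
      by (rule cellV[OF g(1) h g(2) refl g(3) psi])
    note fh = fibar[OF h] and fg = fibar[OF g(1)]
    have ie: "vcmp B (f2 P (inv2 E \<gamma>)) L = phi P h g"
      by (rule inv_eq[OF ga(1) ga(4)]) (use fh fg g ga in simp_all)
    have s2: "\<exists>\<alpha>. fib_iso E B P b \<alpha> \<and> dom2 E \<alpha> = fib_cmp E B P cl b h g \<and> cod2 E \<alpha> = fib_id E B P cl (btrg E h)"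
      by (rule cellV[OF h g(1) _ _ _ _ _ _ ie]) (use g ga in simp_all)
    show "\<exists>g\<in>fib_ar E B P b.
        bsrc E g = btrg E h \<and> btrg E g = bsrc E h \<and>
        (\<exists>\<alpha>. fib_iso E B P b \<alpha> \<and> dom2 E \<alpha> = fib_cmp E B P cl b g h \<and> cod2 E \<alpha> = fib_id E B P cl (bsrc E h)) \<and>
        (\<exists>\<alpha>. fib_iso E B P b \<alpha> \<and> dom2 E \<alpha> = fib_cmp E B P cl b h g \<and> cod2 E \<alpha> = fib_id E B P cl (btrg E h))"
      using g s1 s2 by blast
  qed
qed
end

theorem proposition3p26:
  fixes E :: "('o,'a,'c) bicat" and B :: "('p,'q,'r) bicat"
    and P :: "('o,'a,'c,'p,'q,'r) laxf" and cl :: "'a \<Rightarrow> 'r \<Rightarrow> 'c"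
  assumes "fibered_in_pseudogroupoids E B P"
    and "local_cleavage E B P cl"
    and "b \<in> ob B"
  shows "fiber_is_pseudogroupoid E B P cl b"
proof -
  interpret fibctx E B P cl b by (rule fibctx.intro) (fact assms)+
  show ?thesis by (rule main)
qed



end
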